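(* Let $m\geq 2$, $\mathbf{r}=(r_1,\ldots,r_m)\in(0,+\infty)^m$, and $1<p_m\leq 2<p_1,\ldots,p_{m-1}$ with $\frac{1}{p_1}+\cdots+\frac{1}{p_m}<1$. Then there exists $D^{\mathbb{K}}_{m,\mathbf{p},\mathbf{r}}\geq1$ such that for all positive integers $n_1,\ldots,n_m$ and every bounded $m$-linear form $T:\ell_{p_1}\times\cdots\times\ell_{p_m}\to\mathbb{K}$, $$\left(\sum_{i_1=1}^{n_1}\left(\cdots\left(\sum_{i_m=1}^{n_m}|T(e_{i_1},\ldots,e_{i_m})|^{r_m}\right)^{\frac{r_{m-1}}{r_m}}\cdots\right)^{\frac{r_1}{r_2}}\right)^{\frac{1}{r_1}}\leq D^{\mathbb{K}}_{m,\mathbf{p},\mathbf{r}}\,\|T\|\prod_{k=1}^m n_k^{\max\left\{\frac{1}{r_k}-\frac{1}{\delta^{p_k,\ldots,p_m}_{m-k+1}},\,0\right\}}.$$ Moreover, the exponent $\max\left\{\frac{1}{r_m}-\frac{1}{\delta_1^{p_m}},0\right\}$ of $n_m$ is optimal, and for each $k=1,\ldots,m-1$ the exponent $\max\left\{\frac{1}{r_k}-\frac{1}{\delta^{p_k,\ldots,p_m}_{m-k+1}},0\right\}$ of $n_k$ is optimal provided $r_j\geq\delta^{p_j,\ldots,p_m}_{m-j+1}$ for all $k+1\leq j\leq m$ (optimal meaning it cannot be replaced by a smaller exponent, the other exponents being kept, whatever the constant).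
   Context: $\mathbb{K}=\mathbb{R}$ or $\mathbb{C}$; $\ell_p$ is the usual sequence space, $e_j$ the canonical unit vectors, and $\|T\|=\sup\{|T(x^{(1)},\ldots,x^{(m)})|:\|x^{(j)}\|_{p_j}\le1\}$. For $k=1,\ldots,m$, $\delta^{p_k,\ldots,p_m}_{m-k+1}:=\left(1-\left(\frac{1}{p_k}+\cdots+\frac{1}{p_m}\right)\right)^{-1}$. *)

theory Defs
  imports "HOL-Analysis.Analysis"
begin

text \<open>Conventions: indices are 0-based. The m arguments of an m-linear form are
 indexed by j < m; the coordinates of sequences in l_p are indexed by nat (from 0).\<close>

definition lp_mem :: "real \<Rightarrow> (nat \<Rightarrow> 'k::real_normed_field) \<Rightarrow> bool" where
  "lp_mem p x \<longleftrightarrow> summable (\<lambda>t. norm (x t) powr p)"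

definition lp_norm :: "real \<Rightarrow> (nat \<Rightarrow> 'k::real_normed_field) \<Rightarrow> real" where
  "lp_norm p x = (\<Sum>t. norm (x t) powr p) powr (1 / p)"

definition unit_vec :: "nat \<Rightarrow> nat \<Rightarrow> 'k::real_normed_field" where
  "unit_vec i = (\<lambda>t. if t = i then 1 else 0)"

text \<open>Domain of an m-linear form on l_{p_0} x ... x l_{p_{m-1}}: families of sequences,
  the j-th in l_{p_j} for j < m, and (canonically) zero for j \<ge> m.\<close>
definition multi_dom :: "nat \<Rightarrow> (nat \<Rightarrow> real) \<Rightarrow> (nat \<Rightarrow> nat \<Rightarrow> 'k::real_normed_field) set" where
  "multi_dom m p = {x. (\<forall>j<m. lp_mem (p j) (x j)) \<and> (\<forall>j. m \<le> j \<longrightarrow> x j = (\<lambda>_. 0))}"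

definition multilinear_form ::
  "nat \<Rightarrow> (nat \<Rightarrow> real) \<Rightarrow> ((nat \<Rightarrow> nat \<Rightarrow> 'k::real_normed_field) \<Rightarrow> 'k) \<Rightarrow> bool" where
  "multilinear_form m p T \<longleftrightarrow>
     (\<forall>x\<in>multi_dom m p. \<forall>j<m. \<forall>y. lp_mem (p j) y \<longrightarrow>
        T (x(j := (\<lambda>t. x j t + y t))) = T x + T (x(j := y))) \<and>
     (\<forall>x\<in>multi_dom m p. \<forall>j<m. \<forall>c. T (x(j := (\<lambda>t. c * x j t))) = c * T x)"

definition bounded_multilinear_form ::
  "nat \<Rightarrow> (nat \<Rightarrow> real) \<Rightarrow> ((nat \<Rightarrow> nat \<Rightarrow> 'k::real_normed_field) \<Rightarrow> 'k) \<Rightarrow> bool" where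
  "bounded_multilinear_form m p T \<longleftrightarrow> multilinear_form m p T \<and>
     (\<exists>C. \<forall>x\<in>multi_dom m p. norm (T x) \<le> C * (\<Prod>j<m. lp_norm (p j) (x j)))"

definition form_norm ::
  "nat \<Rightarrow> (nat \<Rightarrow> real) \<Rightarrow> ((nat \<Rightarrow> nat \<Rightarrow> 'k::real_normed_field) \<Rightarrow> 'k) \<Rightarrow> real" where
  "form_norm m p T = (SUP x\<in>{x\<in>multi_dom m p. \<forall>j<m. lp_norm (p j) (x j) \<le> 1}. norm (T x))"

text \<open>Iterated mixed sum: mixed_norm r n a k j idx, with k levels remaining starting at
  level j; at level j sum over i < n j of (next level)^(r j), then take power 1/(r j).
  mixed_norm r n a m 0 idx0 is the left-hand side of the mixed (r_1,...,r_m) inequality.\<close>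
primrec mixed_norm ::
  "(nat \<Rightarrow> real) \<Rightarrow> (nat \<Rightarrow> nat) \<Rightarrow> ((nat \<Rightarrow> nat) \<Rightarrow> real) \<Rightarrow> nat \<Rightarrow> nat \<Rightarrow> (nat \<Rightarrow> nat) \<Rightarrow> real" where
  "mixed_norm r n a 0 j idx = a idx"
| "mixed_norm r n a (Suc k) j idx =
     (\<Sum>i<n j. (mixed_norm r n a k (Suc j) (idx(j := i))) powr (r j)) powr (1 / r j)"

text \<open>delta^{p_k,...,p_m}_{m-k+1} (0-based: k, ..., m-1)\<close>
definition hb_delta :: "(nat \<Rightarrow> real) \<Rightarrow> nat \<Rightarrow> nat \<Rightarrow> real" where
  "hb_delta p k m = 1 / (1 - (\<Sum>j\<in>{k..<m}. 1 / p j))"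

definition hb_exp :: "(nat \<Rightarrow> real) \<Rightarrow> (nat \<Rightarrow> real) \<Rightarrow> nat \<Rightarrow> nat \<Rightarrow> real" where
  "hb_exp p r m k = max (1 / r k - 1 / hb_delta p k m) 0"

definition unit_args :: "nat \<Rightarrow> (nat \<Rightarrow> nat) \<Rightarrow> nat \<Rightarrow> nat \<Rightarrow> 'k::real_normed_field" where
  "unit_args m idx = (\<lambda>j. if j < m then unit_vec (idx j) else (\<lambda>_. 0))"

definition HB_ineq :: "'k::real_normed_field itself \<Rightarrow> nat \<Rightarrow> (nat \<Rightarrow> real) \<Rightarrow> (nat \<Rightarrow> real)
    \<Rightarrow> real \<Rightarrow> (nat \<Rightarrow> real) \<Rightarrow> bool" where
  "HB_ineq K m p r D s \<longleftrightarrow>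
    (\<forall>n::nat \<Rightarrow> nat. (\<forall>k<m. 1 \<le> n k) \<longrightarrow>
      (\<forall>T :: (nat \<Rightarrow> nat \<Rightarrow> 'k) \<Rightarrow> 'k. bounded_multilinear_form m p T \<longrightarrow>
         mixed_norm r n (\<lambda>idx. norm (T (unit_args m idx))) m 0 (\<lambda>_. 0)
           \<le> D * form_norm m p T * (\<Prod>k<m. real (n k) powr s k)))"

end

theory Submission
  imports Defs "HOL-Analysis.Analysis"
begin


lemma powr_inv_cancel: "0 < r \<Longrightarrow> ((x::real) powr r) powr (1/r) = \<bar>x\<bar>"
  by (simp add: powr_powr powr_one')

lemma powr_convex0:
  assumes "1 \<le> (p::real)" shows "convex_on {0..} (\<lambda>x::real. x powr p)"
proof (rule convex_onI)
  show "convex {0::real..}" by simp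
  fix t x y :: real assume t: "0 < t" "t < 1" and xy: "x \<in> {0..}" "y \<in> {0..}"
  show "((1 - t) *\<^sub>R x + t *\<^sub>R y) powr p \<le> (1 - t) * x powr p + t * y powr p"
  proof (cases "x = 0 \<or> y = 0")
    case True
    have tp: "t powr p \<le> t" "(1-t) powr p \<le> 1 - t"
      using powr_mono'[of 1 p t] powr_mono'[of 1 p "1-t"] t assms by auto
    show ?thesis
    proof (cases "x = 0")
      case True
      have "(t * y) powr p = t powr p * y powr p" by (simp add: powr_mult)
      also have "\<dots> \<le> t * y powr p" using tp by (simp add: mult_right_mono)
      finally show ?thesis using True by simp
    next
      case False
      with \<open>x = 0 \<or> y = 0\<close> have "y = 0" by simp
      have "((1-t) * x) powr p = (1-t) powr p * x powr p" by (simp add: powr_mult)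
      also have "\<dots> \<le> (1-t) * x powr p" using tp by (simp add: mult_right_mono)
      finally show ?thesis using \<open>y = 0\<close> by simp
    qed
  next
    case False
    then have "x \<in> {0<..}" "y \<in> {0<..}" using xy by auto
    from convex_onD[OF powr_convex[OF assms], of t x y, OF _ _ this] t
    show ?thesis by simp
  qed
qed

lemma sum_powr_zero_iff:
  fixes f :: "'a \<Rightarrow> real"
  assumes "finite S" "\<forall>i\<in>S. 0 \<le> f i"
  shows "(\<Sum>i\<in>S. f i powr p) = 0 \<longleftrightarrow> (\<forall>i\<in>S. f i = 0)"
  using assms by (simp add: sum_nonneg_eq_0_iff powr_eq_0_iff)

lemma minkowski2:
  fixes f g :: "'a \<Rightarrow> real"
  assumes S: "finite S" and p: "1 \<le> p" and f: "\<forall>i\<in>S. 0 \<le> f i" and g: "\<forall>i\<in>S. 0 \<le> g i"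
  shows "(\<Sum>i\<in>S. (f i + g i) powr p) powr (1/p)
           \<le> (\<Sum>i\<in>S. f i powr p) powr (1/p) + (\<Sum>i\<in>S. g i powr p) powr (1/p)"
proof -
  define X where "X = (\<Sum>i\<in>S. f i powr p)"
  define Y where "Y = (\<Sum>i\<in>S. g i powr p)"
  define A where "A = X powr (1/p)"
  define B where "B = Y powr (1/p)"
  have X0: "X \<ge> 0" "Y \<ge> 0" unfolding X_def Y_def by (auto intro: sum_nonneg)
  have AX: "A powr p = X" "B powr p = Y" unfolding A_def B_def using X0 p by (auto simp: powr_powr)
  show ?thesis
  proof (cases "X = 0 \<or> Y = 0")
    case True
    then show ?thesis
    proof
      assume "X = 0"
      then have "\<forall>i\<in>S. f i = 0" using sum_powr_zero_iff[OF S f] X_def by simp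
      then show ?thesis using \<open>X = 0\<close> X_def by (simp add: powr_ge_zero)
    next
      assume "Y = 0"
      then have "\<forall>i\<in>S. g i = 0" using sum_powr_zero_iff[OF S g] Y_def by simp
      then show ?thesis using \<open>Y = 0\<close> Y_def by (simp add: powr_ge_zero)
    qed
  next
    case False
    then have XY: "X > 0" "Y > 0" using X0 by auto
    then have AB: "A > 0" "B > 0" unfolding A_def B_def by auto
    define t where "t = B / (A + B)"
    have t: "0 \<le> t" "t \<le> 1" "1 - t = A / (A + B)" using AB unfolding t_def by (auto simp: field_simps)
    have pt: "((f i + g i) / (A + B)) powr p \<le> (1 - t) * (f i / A) powr p + t * (g i / B) powr p"
      if i: "i \<in> S" for i
    proof -
      have "(1 - t) * (f i / A) = f i / (A + B)" "t * (g i / B) = g i / (A + B)"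
        using AB t(3) unfolding t_def by (auto simp: field_simps)
      then have "(f i + g i) / (A + B) = (1 - t) *\<^sub>R (f i / A) + t *\<^sub>R (g i / B)"
        by (simp add: add_divide_distrib)
      moreover have "f i / A \<in> {0..}" "g i / B \<in> {0..}" using f g i AB by auto
      ultimately show ?thesis using convex_onD[OF powr_convex0[OF p], of t "f i / A" "g i / B"] t by simp
    qed
    have "(\<Sum>i\<in>S. ((f i + g i) / (A + B)) powr p)
        \<le> (\<Sum>i\<in>S. (1 - t) * (f i / A) powr p + t * (g i / B) powr p)"
      using pt by (rule sum_mono)
    also have "\<dots> = (1 - t) * (X / A powr p) + t * (Y / B powr p)"
      unfolding X_def Y_def by (simp add: sum.distrib sum_distrib_left powr_divide sum_divide_distrib)
    also have "\<dots> = 1" using AX XY by simp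
    finally have "(\<Sum>i\<in>S. (f i + g i) powr p) / (A + B) powr p \<le> 1"
      by (simp add: powr_divide sum_divide_distrib)
    then have "(\<Sum>i\<in>S. (f i + g i) powr p) \<le> (A + B) powr p"
      using AB by (simp add: divide_le_eq)
    then have "(\<Sum>i\<in>S. (f i + g i) powr p) powr (1/p) \<le> ((A + B) powr p) powr (1/p)"
      using p by (intro powr_mono2) (auto intro: sum_nonneg)
    also have "\<dots> = A + B" using AB p by (simp add: powr_powr)
    finally show ?thesis unfolding A_def B_def X_def Y_def .
  qed
qed

lemma minkowski_sum:
  fixes g :: "'a \<Rightarrow> 'b \<Rightarrow> real"
  assumes S: "finite S" and L: "finite L" and p: "1 \<le> p" and g: "\<forall>i\<in>S. \<forall>l\<in>L. 0 \<le> g i l"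
  shows "(\<Sum>i\<in>S. (\<Sum>l\<in>L. g i l) powr p) powr (1/p) \<le> (\<Sum>l\<in>L. (\<Sum>i\<in>S. g i l powr p) powr (1/p))"
  using L g
proof (induction L rule: finite_induct)
  case empty
  then show ?case by simp
next
  case (insert a L)
  have "(\<Sum>i\<in>S. (\<Sum>l\<in>insert a L. g i l) powr p) powr (1/p)
      = (\<Sum>i\<in>S. (g i a + (\<Sum>l\<in>L. g i l)) powr p) powr (1/p)"
    using insert by simp
  also have "\<dots> \<le> (\<Sum>i\<in>S. g i a powr p) powr (1/p) + (\<Sum>i\<in>S. (\<Sum>l\<in>L. g i l) powr p) powr (1/p)"
    using insert by (intro minkowski2[OF S p]) (auto intro: sum_nonneg)
  also have "\<dots> \<le> (\<Sum>i\<in>S. g i a powr p) powr (1/p) + (\<Sum>l\<in>L. (\<Sum>i\<in>S. g i l powr p) powr (1/p))"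
    using insert by simp
  also have "\<dots> = (\<Sum>l\<in>insert a L. (\<Sum>i\<in>S. g i l powr p) powr (1/p))"
    using insert by simp
  finally show ?case .
qed


lemma powr_le_cancel_base:
  fixes x y r :: real
  assumes "0 < r" "0 \<le> x" "0 \<le> y" "x powr r \<le> y powr r" shows "x \<le> y"
proof -
  have "(x powr r) powr (1/r) \<le> (y powr r) powr (1/r)"
    using assms by (rule_tac powr_mono2) auto
  moreover have "(x powr r) powr (1/r) = x" "(y powr r) powr (1/r) = y"
    using assms powr_inv_cancel[of r] by auto
  ultimately show ?thesis by simp
qed

lemma lpn_mono:
  fixes a :: "'a \<Rightarrow> real"
  assumes S: "finite S" and rs: "0 < r" "r \<le> s" and a: "\<forall>i\<in>S. 0 \<le> a i"
  shows "(\<Sum>i\<in>S. a i powr s) powr (1/s) \<le> (\<Sum>i\<in>S. a i powr r) powr (1/r)"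
proof -
  define X where "X = (\<Sum>i\<in>S. a i powr r)"
  define A where "A = X powr (1/r)"
  have X0: "X \<ge> 0" unfolding X_def by (auto intro: sum_nonneg)
  have AX: "A powr r = X" unfolding A_def using X0 rs by (simp add: powr_powr)
  show ?thesis
  proof (cases "X = 0")
    case True
    then have "\<forall>i\<in>S. a i = 0" using sum_powr_zero_iff[OF S a] X_def by simp
    then show ?thesis using True X_def by simp
  next
    case False
    then have A0: "A > 0" unfolding A_def using X0 by simp
    have aA: "a i \<le> A" if "i \<in> S" for i
    proof (rule powr_le_cancel_base[OF rs(1)])
      show "a i powr r \<le> A powr r" unfolding AX X_def
        using that S by (intro member_le_sum) auto
    qed (use a that A0 in auto)
    have "(\<Sum>i\<in>S. (a i / A) powr s) \<le> (\<Sum>i\<in>S. (a i / A) powr r)"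
      using aA a A0 rs by (intro sum_mono powr_mono') auto
    also have "\<dots> = X / A powr r" unfolding X_def by (simp add: powr_divide sum_divide_distrib)
    also have "\<dots> = 1" using AX False by simp
    finally have "(\<Sum>i\<in>S. a i powr s) / A powr s \<le> 1"
      by (simp add: powr_divide sum_divide_distrib)
    then have "(\<Sum>i\<in>S. a i powr s) \<le> A powr s" using A0 by (simp add: divide_le_eq)
    then have "(\<Sum>i\<in>S. a i powr s) powr (1/s) \<le> (A powr s) powr (1/s)"
      using rs by (rule_tac powr_mono2) (auto intro: sum_nonneg)
    also have "\<dots> = A" using A0 rs by (simp add: powr_inv_cancel)
    finally show ?thesis unfolding A_def X_def .
  qed
qed

lemma power_mean:
  fixes a :: "'a \<Rightarrow> real"
  assumes S: "finite S" "S \<noteq> {}" and rd: "0 < r" "r \<le> d" and a: "\<forall>i\<in>S. 0 \<le> a i"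
  shows "(\<Sum>i\<in>S. a i powr r) powr (1/r) \<le> real (card S) powr (1/r - 1/d) * (\<Sum>i\<in>S. a i powr d) powr (1/d)"
proof -
  define n where "n = real (card S)"
  have n: "n > 0" unfolding n_def using S by (simp add: card_gt_0_iff)
  have dr: "1 \<le> d / r" using rd by simp
  have "(\<Sum>i\<in>S. (1/n) *\<^sub>R (a i powr r)) powr (d/r) \<le> (\<Sum>i\<in>S. (1/n) * (a i powr r) powr (d/r))"
    by (rule convex_on_sum[OF S powr_convex0[OF dr]]) (use n in \<open>auto simp: n_def\<close>)
  also have "\<dots> = (1/n) * (\<Sum>i\<in>S. a i powr d)"
    using rd by (simp add: powr_powr sum_distrib_left)
  finally have "((\<Sum>i\<in>S. a i powr r) / n) powr (d/r) \<le> (1/n) * (\<Sum>i\<in>S. a i powr d)"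
    by (simp add: sum_distrib_left divide_inverse mult.commute)
  then have "(\<Sum>i\<in>S. a i powr r) powr (d/r) \<le> n powr (d/r) * ((1/n) * (\<Sum>i\<in>S. a i powr d))"
    using n by (simp add: powr_divide divide_le_eq mult.commute)
  also have "\<dots> = n powr (d/r - 1) * (\<Sum>i\<in>S. a i powr d)"
    using n by (simp add: powr_diff)
  finally have *: "(\<Sum>i\<in>S. a i powr r) powr (d/r) \<le> n powr (d/r - 1) * (\<Sum>i\<in>S. a i powr d)" .
  have "((\<Sum>i\<in>S. a i powr r) powr (d/r)) powr (1/d) \<le> (n powr (d/r - 1) * (\<Sum>i\<in>S. a i powr d)) powr (1/d)"
    using * rd by (intro powr_mono2) auto
  moreover have "((\<Sum>i\<in>S. a i powr r) powr (d/r)) powr (1/d) = (\<Sum>i\<in>S. a i powr r) powr (1/r)"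
    using rd by (simp add: powr_powr)
  moreover have "(n powr (d/r - 1) * (\<Sum>i\<in>S. a i powr d)) powr (1/d)
      = n powr (1/r - 1/d) * (\<Sum>i\<in>S. a i powr d) powr (1/d)"
    using rd by (simp add: powr_mult powr_powr field_simps)
  ultimately show ?thesis unfolding n_def by simp
qed

lemma level_reduce:
  fixes a :: "'a \<Rightarrow> real"
  assumes S: "finite S" "S \<noteq> {}" and rd: "0 < r" "0 < d" and a: "\<forall>i\<in>S. 0 \<le> a i"
  shows "(\<Sum>i\<in>S. a i powr r) powr (1/r) \<le> real (card S) powr (max (1/r - 1/d) 0) * (\<Sum>i\<in>S. a i powr d) powr (1/d)"
proof (cases "r \<le> d")
  case True
  then have "max (1/r - 1/d) 0 = 1/r - 1/d" using rd by (simp add: frac_le)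
  then show ?thesis using power_mean[OF S rd(1) True a] by simp
next
  case False
  then have "max (1/r - 1/d) 0 = 0" using rd by (simp add: frac_le)
  moreover have "card S > 0" using S by (simp add: card_gt_0_iff)
  ultimately show ?thesis using lpn_mono[OF S(1) rd(2) _ a, of r] False by simp
qed

lemma duality_powr:
  fixes a :: "'a \<Rightarrow> real"
  assumes S: "finite S" and cp: "0 < c" "c < p" and a: "\<forall>i\<in>S. 0 \<le> a i" and B: "0 \<le> B"
    and hyp: "\<And>l. (\<forall>i\<in>S. 0 \<le> l i) \<Longrightarrow> (\<Sum>i\<in>S. l i powr p) \<le> 1 \<Longrightarrow>
                 (\<Sum>i\<in>S. (l i * a i) powr c) \<le> B powr c"
  shows "(\<Sum>i\<in>S. a i powr (c * p / (p - c))) \<le> B powr (c * p / (p - c))"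
proof -
  define b where "b = c * p / (p - c)"
  have b: "b > 0" "b / p + 1 = p / (p - c)" "(b / p + 1) * c = b" unfolding b_def using cp
    by (auto simp: field_simps)
  define X where "X = (\<Sum>i\<in>S. a i powr b)"
  have X0: "X \<ge> 0" unfolding X_def by (auto intro: sum_nonneg)
  show ?thesis
  proof (cases "X = 0")
    case True then show ?thesis unfolding X_def b_def by simp
  next
    case False
    then have Xp: "X > 0" using X0 by simp
    define l where "l i = a i powr (b/p) / X powr (1/p)" for i
    have l0: "\<forall>i\<in>S. 0 \<le> l i" unfolding l_def by simp
    have "(\<Sum>i\<in>S. l i powr p) = (\<Sum>i\<in>S. a i powr b / X)"
      unfolding l_def using cp Xp by (intro sum.cong) (auto simp: powr_divide powr_powr)
    also have "\<dots> = 1" using Xp unfolding X_def by (simp add: sum_divide_distrib[symmetric])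
    finally have l1: "(\<Sum>i\<in>S. l i powr p) \<le> 1" by simp
    have "(\<Sum>i\<in>S. (l i * a i) powr c) = (\<Sum>i\<in>S. a i powr b / X powr (c/p))"
    proof (intro sum.cong refl)
      fix i assume i: "i \<in> S"
      have "l i * a i = a i powr (b/p + 1) / X powr (1/p)"
        unfolding l_def using a i by (simp add: powr_add)
      then have "(l i * a i) powr c = a i powr ((b/p + 1) * c) / X powr (1/p * c)"
        by (simp add: powr_divide powr_powr)
      then show "(l i * a i) powr c = a i powr b / X powr (c/p)" using b by simp
    qed
    also have "\<dots> = X / X powr (c/p)" unfolding X_def by (simp add: sum_divide_distrib)
    also have "\<dots> = X powr (1 - c/p)" using Xp by (simp add: powr_diff)
    finally have "X powr (1 - c/p) \<le> B powr c" using hyp[of l, OF l0 l1] by simp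
    then have "(X powr (1 - c/p)) powr (p/(p-c)) \<le> (B powr c) powr (p/(p-c))"
      using cp by (intro powr_mono2) auto
    moreover have "(1 - c/p) * (p/(p-c)) = 1" using cp by (simp add: field_simps)
    then have "(X powr (1 - c/p)) powr (p/(p-c)) = X" using X0 by (simp only: powr_powr powr_one)
    moreover have "(B powr c) powr (p/(p-c)) = B powr (c * (p/(p-c)))" by (simp add: powr_powr)
    ultimately have "X \<le> B powr (c * (p/(p-c)))" by simp
    then show ?thesis unfolding X_def b_def by simp
  qed
qed

lemma interpolate_powr:
  fixes a :: "'a \<Rightarrow> real"
  assumes S: "finite S" and bd: "0 < b" "b \<le> d" and a: "\<forall>i\<in>S. 0 \<le> a i \<and> a i \<le> B"
    and sb: "(\<Sum>i\<in>S. a i powr b) \<le> B powr b"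
  shows "(\<Sum>i\<in>S. a i powr d) \<le> B powr d"
proof -
  have "(\<Sum>i\<in>S. a i powr d) = (\<Sum>i\<in>S. a i powr b * a i powr (d - b))"
    by (intro sum.cong) (auto simp: powr_add[symmetric])
  also have "\<dots> \<le> (\<Sum>i\<in>S. a i powr b * B powr (d - b))"
    using a bd by (intro sum_mono mult_left_mono powr_mono2) auto
  also have "\<dots> = (\<Sum>i\<in>S. a i powr b) * B powr (d - b)" by (simp add: sum_distrib_right)
  also have "\<dots> \<le> B powr b * B powr (d - b)" using sb by (intro mult_right_mono) auto
  also have "\<dots> = B powr d" by (simp add: powr_add[symmetric])
  finally show ?thesis .
qed


lemma powr_two: "(x::real) powr 2 = x^2"
proof (cases "x = 0")
  case False
  have "\<bar>x\<bar> powr real 2 = \<bar>x\<bar>^2" using False by (intro powr_realpow) auto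
  moreover have "x powr 2 = \<bar>x\<bar> powr 2" by (metis abs_ge_zero powr_one' powr_powr mult_1)
  ultimately show ?thesis by simp
qed simp

lemma parallelogram:
  fixes z w :: "'a::real_inner"
  shows "(norm (z + w))^2 + (norm (z - w))^2 = 2 * (norm z)^2 + 2 * (norm w)^2"
  by (simp add: power2_norm_eq_inner inner_add_left inner_add_right inner_diff_left inner_diff_right inner_commute)

fun avg :: "nat \<Rightarrow> ((nat \<Rightarrow> real) \<Rightarrow> real) \<Rightarrow> real" where
  "avg 0 F = F (\<lambda>_. 1)"
| "avg (Suc N) F = (avg N (\<lambda>e. F (e(N := 1))) + avg N (\<lambda>e. F (e(N := -1)))) / 2"

lemma avg_mono: "(\<And>e. F e \<le> G e) \<Longrightarrow> avg N F \<le> avg N G"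
proof (induction N arbitrary: F G)
  case 0 then show ?case by simp
next
  case (Suc N)
  have "avg N (\<lambda>e. F (e(N := 1))) \<le> avg N (\<lambda>e. G (e(N := 1)))"
       "avg N (\<lambda>e. F (e(N := -1))) \<le> avg N (\<lambda>e. G (e(N := -1)))"
    using Suc by auto
  then show ?case by simp
qed

lemma avg_const: "avg N (\<lambda>_. c) = c"
  by (induction N) auto

lemma avg_nonneg: "(\<And>e. 0 \<le> F e) \<Longrightarrow> 0 \<le> avg N F"
  using avg_mono[of "\<lambda>_. 0" F N] by (simp add: avg_const)

lemma avg_aux: "(a::real) \<le> c \<Longrightarrow> b \<le> a \<Longrightarrow> (a + b) / 2 \<le> c" by (auto simp: field_simps)
lemma avg_aux2: "(b::real) \<le> c \<Longrightarrow> \<not> b \<le> a \<Longrightarrow> (a + b) / 2 \<le> c" by (auto simp: field_simps)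

lemma avg_max: "\<exists>e. (\<forall>i<N. e i = 1 \<or> e i = -1) \<and> avg N F \<le> F e"
proof (induction N arbitrary: F)
  case 0 then show ?case by auto
next
  case (Suc N)
  show ?case
  proof (cases "avg N (\<lambda>e. F (e(N := -1))) \<le> avg N (\<lambda>e. F (e(N := 1)))")
    case True
    obtain e where e: "\<forall>i<N. e i = 1 \<or> e i = -1" "avg N (\<lambda>e. F (e(N := 1))) \<le> F (e(N := 1))"
      using Suc[of "\<lambda>e. F (e(N := 1))"] by auto
    have "avg (Suc N) F \<le> F (e(N := 1))" using avg_aux[OF e(2) True] by (simp only: avg.simps)
    moreover have "\<forall>i<Suc N. (e(N := 1)) i = 1 \<or> (e(N := 1)) i = -1" using e(1) by (auto simp: less_Suc_eq)
    ultimately show ?thesis by blast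
  next
    case False
    obtain e where e: "\<forall>i<N. e i = 1 \<or> e i = -1" "avg N (\<lambda>e. F (e(N := -1))) \<le> F (e(N := -1))"
      using Suc[of "\<lambda>e. F (e(N := -1))"] by auto
    have "avg (Suc N) F \<le> F (e(N := -1))" using avg_aux2[OF e(2)] False by (simp only: avg.simps)
    moreover have "\<forall>i<Suc N. (e(N := -1)) i = 1 \<or> (e(N := -1)) i = -1" using e(1) by (auto simp: less_Suc_eq)
    ultimately show ?thesis by blast
  qed
qed

lemma avg_sq:
  fixes w :: "nat \<Rightarrow> 'a::real_inner"
  shows "avg N (\<lambda>e. (norm (z + (\<Sum>i<N. e i *\<^sub>R w i)))^2) = (norm z)^2 + (\<Sum>i<N. (norm (w i))^2)"
proof (induction N arbitrary: z)
  case 0 then show ?case by simp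
next
  case (Suc N)
  have s: "(\<Sum>i<Suc N. (e(N := c)) i *\<^sub>R w i) = c *\<^sub>R w N + (\<Sum>i<N. e i *\<^sub>R w i)" for e c
    by (simp add: lessThan_Suc add.commute)
  have "avg (Suc N) (\<lambda>e. (norm (z + (\<Sum>i<Suc N. e i *\<^sub>R w i)))^2)
      = (avg N (\<lambda>e. (norm ((z + w N) + (\<Sum>i<N. e i *\<^sub>R w i)))^2)
         + avg N (\<lambda>e. (norm ((z - w N) + (\<Sum>i<N. e i *\<^sub>R w i)))^2)) / 2"
    by (simp add: s algebra_simps)
  also have "\<dots> = ((norm (z + w N))^2 + (norm (z - w N))^2) / 2 + (\<Sum>i<N. (norm (w i))^2)"
    unfolding Suc.IH by (simp add: field_simps)
  also have "\<dots> = (norm z)^2 + (\<Sum>i<Suc N. (norm (w i))^2)"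
    using parallelogram[of z "w N"] by simp
  finally show ?case .
qed

lemma avg_minkowski:
  fixes h :: "'b \<Rightarrow> (nat \<Rightarrow> real) \<Rightarrow> real"
  assumes L: "finite L" and s: "1 \<le> s" and h: "\<And>l e. 0 \<le> h l e"
  shows "(\<Sum>l\<in>L. (avg N (h l)) powr s) powr (1/s) \<le> avg N (\<lambda>e. (\<Sum>l\<in>L. h l e powr s) powr (1/s))"
  using h
proof (induction N arbitrary: h)
  case 0 then show ?case by simp
next
  case (Suc N)
  define u where "u l = avg N (\<lambda>e. h l (e(N := 1)))" for l
  define v where "v l = avg N (\<lambda>e. h l (e(N := -1)))" for l
  have u0: "0 \<le> u l" "0 \<le> v l" for l unfolding u_def v_def using Suc.prems by (auto intro: avg_nonneg)
  have hom: "(\<Sum>l\<in>L. (x l / 2) powr s) powr (1/s) = (\<Sum>l\<in>L. x l powr s) powr (1/s) / 2" for x :: "'b \<Rightarrow> real"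
  proof -
    have "(\<Sum>l\<in>L. (x l / 2) powr s) = (\<Sum>l\<in>L. x l powr s) / 2 powr s"
      by (simp add: powr_divide sum_divide_distrib)
    then show ?thesis using s by (simp add: powr_divide powr_powr)
  qed
  have "(\<Sum>l\<in>L. (avg (Suc N) (h l)) powr s) powr (1/s) = (\<Sum>l\<in>L. (u l + v l) powr s) powr (1/s) / 2"
    using hom[of "\<lambda>l. u l + v l"] unfolding u_def v_def by simp
  also have "\<dots> \<le> ((\<Sum>l\<in>L. u l powr s) powr (1/s) + (\<Sum>l\<in>L. v l powr s) powr (1/s)) / 2"
    using minkowski2[OF L s, of u v] u0 by simp
  also have "\<dots> \<le> (avg N (\<lambda>e. (\<Sum>l\<in>L. h l (e(N := 1)) powr s) powr (1/s))
                  + avg N (\<lambda>e. (\<Sum>l\<in>L. h l (e(N := -1)) powr s) powr (1/s))) / 2"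
    using Suc.IH[of "\<lambda>l e. h l (e(N := 1))"] Suc.IH[of "\<lambda>l e. h l (e(N := -1))"] Suc.prems
    unfolding u_def v_def by simp
  also have "\<dots> = avg (Suc N) (\<lambda>e. (\<Sum>l\<in>L. h l e powr s) powr (1/s))" by simp
  finally show ?case .
qed

lemma mn_nonneg: "(\<And>id. 0 \<le> a id) \<Longrightarrow> 0 \<le> mixed_norm r n a K j idx"
  by (cases K) auto

lemma cotype_avg:
  fixes W :: "nat \<Rightarrow> (nat \<Rightarrow> nat) \<Rightarrow> 'a::real_inner"
  assumes q: "2 \<le> q" and e: "\<And>l. j \<le> l \<Longrightarrow> l < j + K \<Longrightarrow> 2 \<le> e l \<and> e l \<le> q"
  shows "(\<Sum>i<N. mixed_norm e n (\<lambda>id. norm (W i id)) K j idx powr q) powr (2/q)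
     \<le> avg N (\<lambda>\<epsilon>. mixed_norm e n (\<lambda>id. norm (\<Sum>i<N. \<epsilon> i *\<^sub>R W i id)) K j idx powr 2)"
  using e
proof (induction K arbitrary: j idx)
  case 0
  have h1: "(\<Sum>i<N. norm (W i idx) powr q) powr (1/q) \<le> (\<Sum>i<N. norm (W i idx) powr 2) powr (1/2)"
    using q by (intro lpn_mono) auto
  have h2: "((\<Sum>i<N. norm (W i idx) powr q) powr (1/q)) powr 2 \<le> ((\<Sum>i<N. norm (W i idx) powr 2) powr (1/2)) powr 2"
    using h1 by (rule_tac powr_mono2) auto
  have eq1: "((\<Sum>i<N. norm (W i idx) powr q) powr (1/q)) powr 2 = (\<Sum>i<N. norm (W i idx) powr q) powr (2/q)"
    by (simp add: powr_powr)
  have eq2: "((\<Sum>i<N. norm (W i idx) powr 2) powr (1/2)) powr 2 = (\<Sum>i<N. norm (W i idx) powr 2)"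
    by (simp only: powr_powr) (simp add: abs_of_nonneg sum_nonneg powr_one')
  have "(\<Sum>i<N. norm (W i idx) powr q) powr (2/q) \<le> (\<Sum>i<N. norm (W i idx) powr 2)"
    using h2 unfolding eq1 eq2 .
  also have "\<dots> = (\<Sum>i<N. (norm (W i idx))^2)" by (simp add: powr_two)
  also have "\<dots> = avg N (\<lambda>\<epsilon>. (norm (0 + (\<Sum>i<N. \<epsilon> i *\<^sub>R W i idx)))^2)"
    by (simp only: avg_sq) simp
  finally show ?case by (simp add: powr_two)
next
  case (Suc K)
  define E where "E = e j"
  have E: "2 \<le> E" "E \<le> q" using Suc.prems[of j] unfolding E_def by auto
  define NN where "NN V l = mixed_norm e n (\<lambda>id. norm (V id)) K (Suc j) (idx(j := l))" for V :: "(nat \<Rightarrow> nat) \<Rightarrow> 'a" and l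
  have NN0: "0 \<le> NN V l" for V l unfolding NN_def by (rule mn_nonneg) simp
  have MN: "mixed_norm e n (\<lambda>id. norm (V id)) (Suc K) j idx = (\<Sum>l<n j. NN V l powr E) powr (1/E)" for V
    unfolding NN_def E_def by simp
  define SW where "SW \<epsilon> id = (\<Sum>i<N. \<epsilon> i *\<^sub>R W i id)" for \<epsilon> id
  define h where "h l \<epsilon> = NN (SW \<epsilon>) l powr 2" for l \<epsilon>
  have IH: "(\<Sum>i<N. NN (W i) l powr q) powr (2/q) \<le> avg N (h l)" for l
    unfolding NN_def h_def SW_def using Suc.prems by (intro Suc.IH) auto
  have "(\<Sum>l<n j. (\<Sum>i<N. NN (W i) l powr q) powr (E/q)) powr (2/E)
      = (\<Sum>l<n j. ((\<Sum>i<N. NN (W i) l powr q) powr (2/q)) powr (E/2)) powr (1/(E/2))"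
    using E by (simp add: powr_powr)
  also have "\<dots> \<le> (\<Sum>l<n j. (avg N (h l)) powr (E/2)) powr (1/(E/2))"
    using E IH by (intro powr_mono2 sum_mono) (auto intro: sum_nonneg)
  also have "\<dots> \<le> avg N (\<lambda>\<epsilon>. (\<Sum>l<n j. h l \<epsilon> powr (E/2)) powr (1/(E/2)))"
    using E by (intro avg_minkowski) (auto simp: h_def)
  also have "\<dots> = avg N (\<lambda>\<epsilon>. mixed_norm e n (\<lambda>id. norm (SW \<epsilon> id)) (Suc K) j idx powr 2)"
    unfolding MN h_def using E by (simp add: powr_powr)
  finally have A: "(\<Sum>l<n j. (\<Sum>i<N. NN (W i) l powr q) powr (E/q)) powr (2/E)
     \<le> avg N (\<lambda>\<epsilon>. mixed_norm e n (\<lambda>id. norm (SW \<epsilon> id)) (Suc K) j idx powr 2)" .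
  have "(\<Sum>i<N. (\<Sum>l<n j. NN (W i) l powr E) powr (q/E)) powr (1/(q/E))
        \<le> (\<Sum>l<n j. (\<Sum>i<N. (NN (W i) l powr E) powr (q/E)) powr (1/(q/E)))"
    using E by (intro minkowski_sum) auto
  then have "((\<Sum>i<N. (\<Sum>l<n j. NN (W i) l powr E) powr (q/E)) powr (1/(q/E))) powr (2/E)
        \<le> (\<Sum>l<n j. (\<Sum>i<N. (NN (W i) l powr E) powr (q/E)) powr (1/(q/E))) powr (2/E)"
    using E by (intro powr_mono2) auto
  then have B: "(\<Sum>i<N. mixed_norm e n (\<lambda>id. norm (W i id)) (Suc K) j idx powr q) powr (2/q)
       \<le> (\<Sum>l<n j. (\<Sum>i<N. NN (W i) l powr q) powr (E/q)) powr (2/E)"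
    unfolding MN using E by (simp add: powr_powr)
  show ?case using order_trans[OF B A] unfolding SW_def .
qed

lemma cotype_max:
  fixes W :: "nat \<Rightarrow> (nat \<Rightarrow> nat) \<Rightarrow> 'a::real_inner"
  assumes q: "2 \<le> q" and e: "\<And>l. j \<le> l \<Longrightarrow> l < j + K \<Longrightarrow> 2 \<le> e l \<and> e l \<le> q"
  shows "\<exists>\<epsilon>. (\<forall>i<N. \<epsilon> i = 1 \<or> \<epsilon> i = -1) \<and>
     (\<Sum>i<N. mixed_norm e n (\<lambda>id. norm (W i id)) K j idx powr q) powr (1/q)
     \<le> mixed_norm e n (\<lambda>id. norm (\<Sum>i<N. \<epsilon> i *\<^sub>R W i id)) K j idx"
proof -
  obtain \<epsilon> where \<epsilon>: "\<forall>i<N. \<epsilon> i = 1 \<or> \<epsilon> i = -1"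
    "avg N (\<lambda>\<epsilon>. mixed_norm e n (\<lambda>id. norm (\<Sum>i<N. \<epsilon> i *\<^sub>R W i id)) K j idx powr 2)
     \<le> mixed_norm e n (\<lambda>id. norm (\<Sum>i<N. \<epsilon> i *\<^sub>R W i id)) K j idx powr 2"
    using avg_max by blast
  have "(\<Sum>i<N. mixed_norm e n (\<lambda>id. norm (W i id)) K j idx powr q) powr (2/q)
     \<le> mixed_norm e n (\<lambda>id. norm (\<Sum>i<N. \<epsilon> i *\<^sub>R W i id)) K j idx powr 2"
  proof (rule order_trans[OF _ \<epsilon>(2)])
    show "(\<Sum>i<N. mixed_norm e n (\<lambda>id. norm (W i id)) K j idx powr q) powr (2/q)
     \<le> avg N (\<lambda>\<epsilon>. mixed_norm e n (\<lambda>id. norm (\<Sum>i<N. \<epsilon> i *\<^sub>R W i id)) K j idx powr 2)"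
      by (rule cotype_avg[OF q]) (use e in auto)
  qed
  then have "((\<Sum>i<N. mixed_norm e n (\<lambda>id. norm (W i id)) K j idx powr q) powr (2/q)) powr (1/2)
     \<le> (mixed_norm e n (\<lambda>id. norm (\<Sum>i<N. \<epsilon> i *\<^sub>R W i id)) K j idx powr 2) powr (1/2)"
    by (intro powr_mono2) auto
  then have "(\<Sum>i<N. mixed_norm e n (\<lambda>id. norm (W i id)) K j idx powr q) powr (1/q)
     \<le> mixed_norm e n (\<lambda>id. norm (\<Sum>i<N. \<epsilon> i *\<^sub>R W i id)) K j idx"
    by (simp add: powr_powr powr_one' abs_of_nonneg mn_nonneg)
  then show ?thesis using \<epsilon>(1) by blast
qed


lemma mn_cong:
  "(\<And>id. (\<forall>l<j. id l = idx l) \<Longrightarrow> a id = b id) \<Longrightarrow> mixed_norm r n a K j idx = mixed_norm r n b K j idx"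
proof (induction K arbitrary: j idx)
  case 0 then show ?case by simp
next
  case (Suc K)
  have "mixed_norm r n a K (Suc j) (idx(j := i)) = mixed_norm r n b K (Suc j) (idx(j := i))" for i
    by (rule Suc.IH) (use Suc.prems in auto)
  then show ?case by simp
qed

lemma mn_shift:
  assumes "\<And>id id'. (\<forall>l\<ge>j0. id l = id' l) \<Longrightarrow> a id = a id'" and "\<forall>l\<ge>j0. idx l = idx' l" and "j0 \<le> j"
  shows "mixed_norm r n a K j idx = mixed_norm r n a K j idx'"
  using assms(2,3)
proof (induction K arbitrary: j idx idx')
  case 0 then show ?case using assms(1) by simp
next
  case (Suc K)
  have "mixed_norm r n a K (Suc j) (idx(j := i)) = mixed_norm r n a K (Suc j) (idx'(j := i))" for i
    by (rule Suc.IH) (use Suc.prems in auto)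
  then show ?case by simp
qed

lemma mn_mono:
  assumes "\<And>id. 0 \<le> a id" "\<And>id. a id \<le> b id" and "\<And>l. j \<le> l \<Longrightarrow> l < j + K \<Longrightarrow> 0 \<le> r l"
  shows "mixed_norm r n a K j idx \<le> mixed_norm r n b K j idx"
  using assms(3)
proof (induction K arbitrary: j idx)
  case 0 then show ?case using assms by simp
next
  case (Suc K)
  have le: "mixed_norm r n a K (Suc j) (idx(j := i)) \<le> mixed_norm r n b K (Suc j) (idx(j := i))" for i
    by (rule Suc.IH) (use Suc.prems in auto)
  have r: "0 \<le> r j" using Suc.prems by auto
  have "(\<Sum>i<n j. mixed_norm r n a K (Suc j) (idx(j := i)) powr r j)
      \<le> (\<Sum>i<n j. mixed_norm r n b K (Suc j) (idx(j := i)) powr r j)"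
    using le r by (intro sum_mono powr_mono2 mn_nonneg assms(1)) auto
  then show ?case using r by (simp add: powr_mono2 sum_nonneg)
qed

lemma mn_scale:
  assumes c: "0 \<le> c" and a: "\<And>id. 0 \<le> a id" and r: "\<And>l. j \<le> l \<Longrightarrow> l < j + K \<Longrightarrow> 0 < r l"
  shows "mixed_norm r n (\<lambda>id. c * a id) K j idx = c * mixed_norm r n a K j idx"
  using r
proof (induction K arbitrary: j idx)
  case 0 then show ?case by simp
next
  case (Suc K)
  have IH: "mixed_norm r n (\<lambda>id. c * a id) K (Suc j) (idx(j := i)) = c * mixed_norm r n a K (Suc j) (idx(j := i))" for i
    by (rule Suc.IH) (use Suc.prems in auto)
  have rj: "0 < r j" using Suc.prems by auto
  have "(\<Sum>i<n j. (c * mixed_norm r n a K (Suc j) (idx(j := i))) powr r j) powr (1 / r j)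
      = (c powr r j * (\<Sum>i<n j. mixed_norm r n a K (Suc j) (idx(j := i)) powr r j)) powr (1 / r j)"
    by (simp add: powr_mult sum_distrib_left)
  also have "\<dots> = c * (\<Sum>i<n j. mixed_norm r n a K (Suc j) (idx(j := i)) powr r j) powr (1 / r j)"
    using rj c by (simp add: powr_mult powr_powr)
  finally show ?case using IH by simp
qed

lemma mn_reduce:
  assumes a: "\<And>id. 0 \<le> a id"
    and lv: "\<And>l. j \<le> l \<Longrightarrow> l < j + K \<Longrightarrow> 0 < r l \<and> 0 < d l \<and> 1 \<le> n l"
  shows "mixed_norm r n a K j idx
     \<le> (\<Prod>l\<in>{j..<j+K}. real (n l) powr max (1 / r l - 1 / d l) 0) * mixed_norm d n a K j idx"
  using lv
proof (induction K arbitrary: j idx)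
  case 0 then show ?case by simp
next
  case (Suc K)
  define P where "P = (\<Prod>l\<in>{Suc j..<Suc j+K}. real (n l) powr max (1 / r l - 1 / d l) 0)"
  have P0: "0 \<le> P" unfolding P_def by (rule prod_nonneg) simp
  have IH: "mixed_norm r n a K (Suc j) (idx(j := i)) \<le> P * mixed_norm d n a K (Suc j) (idx(j := i))" for i
    unfolding P_def by (rule Suc.IH) (use Suc.prems in auto)
  have lj: "0 < r j" "0 < d j" "1 \<le> n j" using Suc.prems[of j] by auto
  have "mixed_norm r n a (Suc K) j idx = (\<Sum>i<n j. mixed_norm r n a K (Suc j) (idx(j := i)) powr r j) powr (1 / r j)"
    by simp
  also have "\<dots> \<le> (\<Sum>i<n j. (P * mixed_norm d n a K (Suc j) (idx(j := i))) powr r j) powr (1 / r j)"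
    using IH lj by (intro powr_mono2 sum_mono) (auto intro: sum_nonneg mn_nonneg a)
  also have "\<dots> = P * (\<Sum>i<n j. mixed_norm d n a K (Suc j) (idx(j := i)) powr r j) powr (1 / r j)"
    using lj P0 by (simp add: powr_mult sum_distrib_left[symmetric] powr_powr)
  also have "\<dots> \<le> P * (real (n j) powr max (1 / r j - 1 / d j) 0 *
        (\<Sum>i<n j. mixed_norm d n a K (Suc j) (idx(j := i)) powr d j) powr (1 / d j))"
  proof (rule mult_left_mono[OF _ P0])
    have ne: "{..<n j} \<noteq> {}" using lj by (auto simp: lessThan_empty_iff)
    show "(\<Sum>i<n j. mixed_norm d n a K (Suc j) (idx(j := i)) powr r j) powr (1 / r j)
      \<le> real (n j) powr max (1 / r j - 1 / d j) 0 *
        (\<Sum>i<n j. mixed_norm d n a K (Suc j) (idx(j := i)) powr d j) powr (1 / d j)"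
      using level_reduce[of "{..<n j}" "r j" "d j" "\<lambda>i. mixed_norm d n a K (Suc j) (idx(j := i))", OF _ ne] lj
      by (simp add: mn_nonneg a)
  qed
  also have "\<dots> = (\<Prod>l\<in>{j..<j + Suc K}. real (n l) powr max (1 / r l - 1 / d l) 0) * mixed_norm d n a (Suc K) j idx"
    unfolding P_def by (simp add: prod.atLeast_Suc_lessThan)
  finally show ?case .
qed


lemma lp_mem_fin:
  fixes x :: "nat \<Rightarrow> 'k::real_normed_field"
  assumes "\<And>t. N \<le> t \<Longrightarrow> x t = 0" shows "lp_mem p x"
  unfolding lp_mem_def by (rule summable_finite[of "{..<N}"]) (use assms in auto)

lemma lp_norm_fin:
  fixes x :: "nat \<Rightarrow> 'k::real_normed_field"
  assumes "\<And>t. N \<le> t \<Longrightarrow> x t = 0" shows "lp_norm p x = (\<Sum>t<N. norm (x t) powr p) powr (1/p)"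
  unfolding lp_norm_def by (subst suminf_finite[of "{..<N}"]) (use assms in auto)

lemma unit_vec_apply: "unit_vec i t = (if t = i then 1 else 0)"
  by (simp add: unit_vec_def)

lemma lp_mem_unit: "lp_mem p (unit_vec i :: nat \<Rightarrow> 'k::real_normed_field)"
  by (rule lp_mem_fin[of "Suc i"]) (auto simp: unit_vec_def)

lemma lp_norm_unit: "lp_norm p (unit_vec i :: nat \<Rightarrow> 'k::real_normed_field) = 1"
proof -
  have "lp_norm p (unit_vec i :: nat \<Rightarrow> 'k) = (\<Sum>t<Suc i. norm (unit_vec i t :: 'k) powr p) powr (1/p)"
    by (rule lp_norm_fin) (auto simp: unit_vec_def)
  also have "(\<Sum>t<Suc i. norm (unit_vec i t :: 'k) powr p) = (\<Sum>t<Suc i. if t = i then 1 else 0)"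
    by (intro sum.cong) (auto simp: unit_vec_def)
  also have "\<dots> = 1" by simp
  finally show ?thesis by simp
qed

lemma lp_norm_nonneg: "0 \<le> lp_norm p x"
  by (simp add: lp_norm_def)

lemma lp_mem_scale:
  fixes x :: "nat \<Rightarrow> 'k::real_normed_field"
  assumes "lp_mem p x" shows "lp_mem p (\<lambda>t. c * x t)"
proof -
  have "summable (\<lambda>t. norm c powr p * norm (x t) powr p)"
    using assms unfolding lp_mem_def by (rule summable_mult)
  then show ?thesis unfolding lp_mem_def by (simp add: norm_mult powr_mult)
qed

lemma lp_norm_scale:
  fixes x :: "nat \<Rightarrow> 'k::real_normed_field"
  assumes "lp_mem p x" "0 < p" shows "lp_norm p (\<lambda>t. c * x t) = norm c * lp_norm p x"
proof -
  have e: "(\<lambda>t. norm (c * x t) powr p) = (\<lambda>t. norm c powr p * norm (x t) powr p)"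
    by (simp add: norm_mult powr_mult)
  have "(\<Sum>t. norm (c * x t) powr p) = norm c powr p * (\<Sum>t. norm (x t) powr p)"
    unfolding e using assms(1) unfolding lp_mem_def by (rule suminf_mult)
  then have "lp_norm p (\<lambda>t. c * x t) = (norm c powr p * (\<Sum>t. norm (x t) powr p)) powr (1/p)"
    unfolding lp_norm_def by simp
  also have "\<dots> = (norm c powr p) powr (1/p) * (\<Sum>t. norm (x t) powr p) powr (1/p)" by (rule powr_mult)
  also have "(norm c powr p) powr (1/p) = norm c" using powr_inv_cancel[OF assms(2)] by simp
  finally show ?thesis unfolding lp_norm_def .
qed

lemma lp_norm_zero:
  fixes x :: "nat \<Rightarrow> 'k::real_normed_field"
  assumes "lp_mem p x" "lp_norm p x = 0" shows "x t = 0"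
proof -
  have "(\<Sum>t. norm (x t) powr p) = 0" using assms unfolding lp_norm_def by simp
  then have "\<forall>t. norm (x t) powr p = 0" using assms(1) unfolding lp_mem_def
    by (subst (asm) suminf_eq_zero_iff) auto
  then show ?thesis by simp
qed

lemma lp_partial:
  fixes x :: "nat \<Rightarrow> 'k::real_normed_field"
  assumes "lp_mem p x" "finite I" "0 < p" shows "(\<Sum>t\<in>I. norm (x t) powr p) \<le> lp_norm p x powr p"
proof -
  have "(\<Sum>t\<in>I. norm (x t) powr p) \<le> (\<Sum>t. norm (x t) powr p)"
    using assms unfolding lp_mem_def by (intro sum_le_suminf) auto
  also have "\<dots> = lp_norm p x powr p"
    unfolding lp_norm_def using assms(1,3) unfolding lp_mem_def by (simp add: powr_powr suminf_nonneg)
  finally show ?thesis .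
qed

lemma lp_coord:
  fixes x :: "nat \<Rightarrow> 'k::real_normed_field"
  assumes "lp_mem p x" "0 < p" shows "norm (x t) \<le> lp_norm p x"
proof -
  have "norm (x t) powr p \<le> lp_norm p x powr p" using lp_partial[OF assms(1), of "{t}"] assms(2) by simp
  then show ?thesis using assms(2) by (rule_tac powr_le_cancel_base[of p]) (auto simp: lp_norm_nonneg)
qed

lemma lp_norm_le1_sum:
  fixes x :: "nat \<Rightarrow> 'k::real_normed_field"
  assumes "lp_mem p x" "finite I" "lp_norm p x \<le> 1" "0 < p" shows "(\<Sum>t\<in>I. norm (x t) powr p) \<le> 1"
proof -
  have "lp_norm p x powr p \<le> 1 powr p" using assms by (intro powr_mono2) (auto simp: lp_norm_nonneg)
  then show ?thesis using lp_partial[OF assms(1,2,4)] by simp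
qed

lemma multi_dom_upd:
  assumes "x \<in> multi_dom m p" "j < m" "lp_mem (p j) f" shows "x(j := f) \<in> multi_dom m p"
  using assms unfolding multi_dom_def by auto

lemma multi_dom_lp: "x \<in> multi_dom m p \<Longrightarrow> j < m \<Longrightarrow> lp_mem (p j) (x j)"
  unfolding multi_dom_def by auto

lemma ml_hom:
  assumes "multilinear_form m p T" "x \<in> multi_dom m p" "j < m"
  shows "T (x(j := (\<lambda>t. c * x j t))) = c * T x"
  using assms unfolding multilinear_form_def by blast

lemma ml_add:
  assumes "multilinear_form m p T" "x \<in> multi_dom m p" "j < m" "lp_mem (p j) y"
  shows "T (x(j := (\<lambda>t. x j t + y t))) = T x + T (x(j := y))"
  using assms unfolding multilinear_form_def by blast

lemma ml_zero:
  fixes T :: "(nat \<Rightarrow> nat \<Rightarrow> 'k::real_normed_field) \<Rightarrow> 'k"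
  assumes "multilinear_form m p T" "x \<in> multi_dom m p" "j < m"
  shows "T (x(j := (\<lambda>t. 0))) = 0"
proof -
  have "T (x(j := (\<lambda>t. 0 * x j t))) = 0 * T x" by (rule ml_hom[OF assms])
  moreover have "(\<lambda>t. 0 * x j t) = (\<lambda>t. 0)" by simp
  ultimately show ?thesis by simp
qed

lemma ml_sum:
  fixes T :: "(nat \<Rightarrow> nat \<Rightarrow> 'k::real_normed_field) \<Rightarrow> 'k"
  assumes T: "multilinear_form m p T" and x: "x \<in> multi_dom m p" and j: "j < m"
    and S: "finite S" and f: "\<And>i t. i \<in> S \<Longrightarrow> N \<le> t \<Longrightarrow> f i t = 0"
  shows "T (x(j := (\<lambda>t. \<Sum>i\<in>S. c i * f i t))) = (\<Sum>i\<in>S. c i * T (x(j := f i)))"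
  using S f
proof (induction S rule: finite_induct)
  case empty
  then show ?case using ml_zero[OF T x j] by (simp only: sum.empty)
next
  case (insert a S)
  define y0 where "y0 = x(j := (\<lambda>t. c a * f a t))"
  define g where "g = (\<lambda>t. \<Sum>i\<in>S. c i * f i t)"
  have fa: "lp_mem (p j) (f a)" using insert.prems by (intro lp_mem_fin[of N]) auto
  have y0: "y0 \<in> multi_dom m p" unfolding y0_def using x j fa by (intro multi_dom_upd lp_mem_scale)
  have g: "lp_mem (p j) g" unfolding g_def using insert.prems by (intro lp_mem_fin[of N]) auto
  have xa: "x(j := f a) \<in> multi_dom m p" using x j fa by (rule multi_dom_upd)
  have "T (x(j := (\<lambda>t. \<Sum>i\<in>insert a S. c i * f i t))) = T (y0(j := (\<lambda>t. y0 j t + g t)))"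
    unfolding y0_def g_def using insert by simp
  also have "\<dots> = T y0 + T (y0(j := g))" by (rule ml_add[OF T y0 j g])
  also have "T y0 = c a * T (x(j := f a))"
    using ml_hom[OF T xa j, of "c a"] unfolding y0_def by simp
  also have "T (y0(j := g)) = T (x(j := g))" by (simp only: y0_def fun_upd_upd)
  also have "\<dots> = (\<Sum>i\<in>S. c i * T (x(j := f i)))"
    unfolding g_def by (rule insert.IH) (use insert.prems in auto)
  finally show ?case by (simp only: sum.insert[OF insert.hyps])
qed

lemma zero_dom: "(\<lambda>j t. 0) \<in> multi_dom m p"
  unfolding multi_dom_def by (auto intro: lp_mem_fin[of 0])

lemma lp_norm_zero_vec: "lp_norm p (\<lambda>t. 0 :: 'k::real_normed_field) = 0"
  unfolding lp_norm_def by simp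

lemma form_norm_bdd:
  fixes T :: "(nat \<Rightarrow> nat \<Rightarrow> 'k::real_normed_field) \<Rightarrow> 'k"
  assumes "bounded_multilinear_form m p T"
  shows "bdd_above ((\<lambda>x. norm (T x)) ` {x\<in>multi_dom m p. \<forall>j<m. lp_norm (p j) (x j) \<le> 1})"
proof -
  obtain C where C: "\<forall>x\<in>multi_dom m p. norm (T x) \<le> C * (\<Prod>j<m. lp_norm (p j) (x j))"
    using assms unfolding bounded_multilinear_form_def by blast
  show ?thesis
  proof (rule bdd_aboveI2)
    fix x :: "nat \<Rightarrow> nat \<Rightarrow> 'k" assume x: "x \<in> {x\<in>multi_dom m p. \<forall>j<m. lp_norm (p j) (x j) \<le> 1}"
    have P: "0 \<le> (\<Prod>j<m. lp_norm (p j) (x j))" "(\<Prod>j<m. lp_norm (p j) (x j)) \<le> 1"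
      using x by (auto intro: prod_nonneg prod_le_1 simp: lp_norm_nonneg)
    have "norm (T x) \<le> C * (\<Prod>j<m. lp_norm (p j) (x j))" using C x by auto
    also have "\<dots> \<le> \<bar>C\<bar> * (\<Prod>j<m. lp_norm (p j) (x j))" using P by (intro mult_right_mono) auto
    also have "\<dots> \<le> \<bar>C\<bar>" using P by (simp add: mult_left_le)
    finally show "norm (T x) \<le> \<bar>C\<bar>" .
  qed
qed

lemma form_norm_upper:
  fixes T :: "(nat \<Rightarrow> nat \<Rightarrow> 'k::real_normed_field) \<Rightarrow> 'k"
  assumes "bounded_multilinear_form m p T" "x \<in> multi_dom m p" "\<forall>j<m. lp_norm (p j) (x j) \<le> 1"
  shows "norm (T x) \<le> form_norm m p T"
  unfolding form_norm_def by (rule cSUP_upper[OF _ form_norm_bdd[OF assms(1)]]) (use assms in auto)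

lemma form_norm_nonneg:
  fixes T :: "(nat \<Rightarrow> nat \<Rightarrow> 'k::real_normed_field) \<Rightarrow> 'k"
  assumes "bounded_multilinear_form m p T" shows "0 \<le> form_norm m p T"
  using form_norm_upper[OF assms zero_dom] by (auto simp: lp_norm_zero_vec intro: order_trans[OF norm_ge_zero])

lemma form_norm_bound:
  fixes T :: "(nat \<Rightarrow> nat \<Rightarrow> 'k::real_normed_field) \<Rightarrow> 'k"
  assumes B: "bounded_multilinear_form m p T" and pp: "\<forall>j<m. 0 < p j" and x: "x \<in> multi_dom m p"
  shows "norm (T x) \<le> form_norm m p T * (\<Prod>j<m. lp_norm (p j) (x j))"
proof -
  have T: "multilinear_form m p T" using B unfolding bounded_multilinear_form_def by simp
  have C0: "0 \<le> form_norm m p T" by (rule form_norm_nonneg[OF B])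
  have "\<forall>x\<in>(multi_dom m p :: (nat \<Rightarrow> nat \<Rightarrow> 'k) set). (\<forall>j. K \<le> j \<and> j < m \<longrightarrow> lp_norm (p j) (x j) \<le> 1) \<longrightarrow>
          norm (T x) \<le> form_norm m p T * (\<Prod>j\<in>{..<min K m}. lp_norm (p j) (x j))" for K
  proof (induction K)
    case 0
    then show ?case using form_norm_upper[OF B] by auto
  next
    case (Suc K)
    show ?case
    proof (intro ballI impI)
      fix x :: "nat \<Rightarrow> nat \<Rightarrow> 'k" assume x: "x \<in> multi_dom m p" and n1: "\<forall>j. Suc K \<le> j \<and> j < m \<longrightarrow> lp_norm (p j) (x j) \<le> 1"
      show "norm (T x) \<le> form_norm m p T * (\<Prod>j\<in>{..<min (Suc K) m}. lp_norm (p j) (x j))"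
      proof (cases "K < m")
        case False
        then have "min (Suc K) m = min K m" by simp
        then show ?thesis using Suc.IH x n1 by auto
      next
        case True
        then have mK: "min (Suc K) m = Suc K" "min K m = K" by auto
        define \<nu> where "\<nu> = lp_norm (p K) (x K)"
        have xK: "lp_mem (p K) (x K)" using x True by (rule multi_dom_lp)
        have P0: "0 \<le> (\<Prod>j\<in>{..<K}. lp_norm (p j) (x j))" by (intro prod_nonneg) (simp add: lp_norm_nonneg)
        show ?thesis
        proof (cases "\<nu> = 0")
          case True
          then have "x K = (\<lambda>t. 0)" using lp_norm_zero[OF xK] unfolding \<nu>_def by auto
          then have "x = x(K := (\<lambda>t. 0))" by auto
          then have "T x = 0" using ml_zero[OF T x \<open>K < m\<close>] by simp
          then show ?thesis using C0 by (simp, intro mult_nonneg_nonneg prod_nonneg) (auto simp: lp_norm_nonneg)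
        next
          case False
          then have \<nu>0: "\<nu> > 0" using lp_norm_nonneg unfolding \<nu>_def by (metis less_eq_real_def)
          define x' where "x' = x(K := (\<lambda>t. of_real (1/\<nu>) * x K t))"
          have x': "x' \<in> multi_dom m p" unfolding x'_def using x True xK by (intro multi_dom_upd lp_mem_scale)
          have nx': "lp_norm (p K) (x' K) = 1"
          proof -
            have "lp_norm (p K) (x' K) = norm (of_real (1/\<nu>) :: 'k) * lp_norm (p K) (x K)"
              unfolding x'_def using lp_norm_scale[OF xK, of "of_real (1/\<nu>)"] pp True by simp
            also have "\<dots> = 1" using \<nu>0 by (simp add: \<nu>_def[symmetric] norm_divide)
            finally show ?thesis .
          qed
          have "\<forall>j. K \<le> j \<and> j < m \<longrightarrow> lp_norm (p j) (x' j) \<le> 1"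
            using n1 nx' unfolding x'_def by (auto simp: le_Suc_eq)
          then have IH: "norm (T x') \<le> form_norm m p T * (\<Prod>j\<in>{..<K}. lp_norm (p j) (x' j))"
            using Suc.IH x' mK by auto
          have "x'(K := (\<lambda>t. of_real \<nu> * x' K t)) = x"
            unfolding x'_def using \<nu>0 by (auto simp: mult.assoc[symmetric] of_real_mult[symmetric])
          then have Tx: "T x = of_real \<nu> * T x'" using ml_hom[OF T x' True, of "of_real \<nu>"] by simp
          have pe: "(\<Prod>j\<in>{..<K}. lp_norm (p j) (x' j)) = (\<Prod>j\<in>{..<K}. lp_norm (p j) (x j))"
            unfolding x'_def by (intro prod.cong) auto
          have "norm (T x) = \<nu> * norm (T x')" using Tx \<nu>0 by (simp add: norm_mult)
          also have "\<dots> \<le> \<nu> * (form_norm m p T * (\<Prod>j\<in>{..<K}. lp_norm (p j) (x j)))"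
            using IH pe \<nu>0 by (intro mult_left_mono) auto
          also have "\<dots> = form_norm m p T * (\<Prod>j\<in>{..<Suc K}. lp_norm (p j) (x j))"
            by (simp add: \<nu>_def)
          finally show ?thesis using mK by simp
        qed
      qed
    qed
  qed
  from this[of m] x show ?thesis by auto
qed


definition upd :: "nat \<Rightarrow> nat \<Rightarrow> (nat \<Rightarrow> nat \<Rightarrow> 'k::real_normed_field) \<Rightarrow> (nat \<Rightarrow> nat) \<Rightarrow> nat \<Rightarrow> nat \<Rightarrow> 'k" where
  "upd m k x idx = (\<lambda>j. if k \<le> j \<and> j < m then unit_vec (idx j) else x j)"

lemma upd_dom: "x \<in> multi_dom m p \<Longrightarrow> upd m k x idx \<in> multi_dom m p"
  unfolding multi_dom_def upd_def by (auto simp: lp_mem_unit)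

lemma upd_mm: "upd m m x idx = x"
  unfolding upd_def by (rule ext) auto

lemma upd_split: "k < m \<Longrightarrow> upd m k x ix = upd m (Suc k) (x(k := unit_vec (ix k))) ix"
  unfolding upd_def by (auto simp: fun_eq_iff)

lemma upd_upd: "upd m (Suc k) (x(k := v)) ix = (upd m (Suc k) x ix)(k := v)"
  unfolding upd_def by (auto simp: fun_eq_iff)

lemma upd_dep: "\<forall>l\<ge>k. ix l = iy l \<Longrightarrow> upd m k x ix = upd m k x iy"
  unfolding upd_def by (auto simp: fun_eq_iff)

definition Acoef where
  "Acoef m d n T x k idx i = mixed_norm d n (\<lambda>ix. norm (T (upd m (Suc k) (x(k := unit_vec i)) ix))) (m - Suc k) (Suc k) idx"

lemma mn_split:
  assumes "k < m"
  shows "mixed_norm d n (\<lambda>ix. norm (T (upd m k x ix))) (m - k) k idx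
       = (\<Sum>i<n k. Acoef m d n T x k idx i powr d k) powr (1 / d k)"
proof -
  have mk: "m - k = Suc (m - Suc k)" using assms by simp
  have "mixed_norm d n (\<lambda>ix. norm (T (upd m k x ix))) (m - Suc k) (Suc k) (idx(k := i)) = Acoef m d n T x k idx i" for i
  proof -
    have "mixed_norm d n (\<lambda>ix. norm (T (upd m k x ix))) (m - Suc k) (Suc k) (idx(k := i))
        = mixed_norm d n (\<lambda>ix. norm (T (upd m (Suc k) (x(k := unit_vec i)) ix))) (m - Suc k) (Suc k) (idx(k := i))"
    proof (rule mn_cong)
      fix ix assume "\<forall>l<Suc k. ix l = (idx(k := i)) l"
      then have "ix k = i" by auto
      then show "norm (T (upd m k x ix)) = norm (T (upd m (Suc k) (x(k := unit_vec i)) ix))"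
        using upd_split[OF assms, of x ix] by simp
    qed
    also have "\<dots> = Acoef m d n T x k idx i"
      unfolding Acoef_def
    proof (rule mn_shift[of "Suc k"])
      fix ix iy :: "nat \<Rightarrow> nat" assume "\<forall>l\<ge>Suc k. ix l = iy l"
      then show "norm (T (upd m (Suc k) (x(k := unit_vec i)) ix)) = norm (T (upd m (Suc k) (x(k := unit_vec i)) iy))"
        using upd_dep[of "Suc k" ix iy] by metis
    qed auto
    finally show ?thesis .
  qed
  then show ?thesis unfolding mk by simp
qed

lemma G_step:
  fixes T :: "(nat \<Rightarrow> nat \<Rightarrow> 'k::real_normed_field) \<Rightarrow> 'k"
  assumes B: "bounded_multilinear_form m p T" and km: "k < m"
    and hyp: "\<forall>x\<in>multi_dom m p. \<forall>idx. mixed_norm d n (\<lambda>ix. norm (T (upd m (Suc k) x ix))) (m - Suc k) (Suc k) idx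
               \<le> form_norm m p T * (\<Prod>j<Suc k. lp_norm (p j) (x j))"
    and c: "0 < c" "c < p k" "0 < d k" "c * p k / (p k - c) \<le> d k"
    and Bc: "\<And>x idx l. x \<in> multi_dom m p \<Longrightarrow> (\<forall>i<n k. 0 \<le> l i) \<Longrightarrow> (\<Sum>i<n k. l i powr p k) \<le> 1 \<Longrightarrow>
        (\<Sum>i<n k. (l i * Acoef m d n T x k idx i) powr c) \<le> (form_norm m p T * (\<Prod>j<k. lp_norm (p j) (x j))) powr c"
  shows "\<forall>x\<in>multi_dom m p. \<forall>idx. mixed_norm d n (\<lambda>ix. norm (T (upd m k x ix))) (m - k) k idx
               \<le> form_norm m p T * (\<Prod>j<k. lp_norm (p j) (x j))"
proof (intro ballI allI)
  fix x :: "nat \<Rightarrow> nat \<Rightarrow> 'k" and idx assume x: "x \<in> multi_dom m p"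
  define CP where "CP = form_norm m p T * (\<Prod>j<k. lp_norm (p j) (x j))"
  have CP0: "0 \<le> CP" unfolding CP_def using form_norm_nonneg[OF B]
    by (intro mult_nonneg_nonneg prod_nonneg) (auto simp: lp_norm_nonneg)
  define A where "A i = Acoef m d n T x k idx i" for i
  have A0: "0 \<le> A i" for i unfolding A_def Acoef_def by (rule mn_nonneg) simp
  have AB: "A i \<le> CP" for i
  proof -
    have xi: "x(k := unit_vec i) \<in> multi_dom m p" using x km by (intro multi_dom_upd lp_mem_unit)
    have "A i \<le> form_norm m p T * (\<Prod>j<Suc k. lp_norm (p j) ((x(k := unit_vec i)) j))"
      unfolding A_def Acoef_def using hyp xi by blast
    also have "(\<Prod>j<Suc k. lp_norm (p j) ((x(k := unit_vec i)) j)) = (\<Prod>j<k. lp_norm (p j) (x j))"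
      by (simp add: lessThan_Suc lp_norm_unit)
    finally show ?thesis unfolding CP_def .
  qed
  have dual: "(\<Sum>i<n k. A i powr (c * p k / (p k - c))) \<le> CP powr (c * p k / (p k - c))"
    using c A0 CP0 by (intro duality_powr) (auto simp: A_def CP_def intro!: Bc[OF x])
  have "(\<Sum>i<n k. A i powr d k) \<le> CP powr d k"
  proof (rule interpolate_powr[OF _ _ _ _ dual])
    show "0 < c * p k / (p k - c)" using c by simp
  qed (use c A0 AB in auto)
  then have "(\<Sum>i<n k. A i powr d k) powr (1 / d k) \<le> (CP powr d k) powr (1 / d k)"
    using c by (intro powr_mono2) (auto intro: sum_nonneg)
  also have "\<dots> = CP" using c CP0 by (simp add: powr_powr)
  finally show "mixed_norm d n (\<lambda>ix. norm (T (upd m k x ix))) (m - k) k idx \<le> CP"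
    unfolding mn_split[OF km] A_def .
qed


definition vec_of :: "(nat \<Rightarrow> 'k::real_normed_field) \<Rightarrow> nat \<Rightarrow> nat \<Rightarrow> 'k" where
  "vec_of cf N = (\<lambda>t. \<Sum>i<N. cf i * unit_vec i t)"

lemma vec_of_lt: "t < N \<Longrightarrow> vec_of cf N t = cf t"
  unfolding vec_of_def unit_vec_def by (simp add: if_distrib cong: if_cong)

lemma vec_of_ge: "N \<le> t \<Longrightarrow> vec_of cf N t = 0"
  unfolding vec_of_def unit_vec_def by auto

lemma vec_of_lp: "lp_mem p (vec_of cf N)"
  by (rule lp_mem_fin[of N]) (simp add: vec_of_ge)

lemma vec_of_norm:
  fixes cf :: "nat \<Rightarrow> 'k::real_normed_field"
  assumes "0 < p" "\<And>i. i < N \<Longrightarrow> norm (cf i) \<le> l i" "(\<Sum>i<N. l i powr p) \<le> 1"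
  shows "lp_norm p (vec_of cf N) \<le> 1"
proof -
  have L: "lp_norm p (vec_of cf N) = (\<Sum>t<N. norm (vec_of cf N t) powr p) powr (1/p)"
    by (rule lp_norm_fin) (simp add: vec_of_ge)
  have "(\<Sum>t<N. norm (vec_of cf N t) powr p) \<le> (\<Sum>t<N. l t powr p)"
    using assms by (intro sum_mono powr_mono2) (auto simp: vec_of_lt)
  also have "\<dots> \<le> 1" by (rule assms(3))
  finally have S1: "(\<Sum>t<N. norm (vec_of cf N t) powr p) \<le> 1" .
  have S0: "0 \<le> (\<Sum>t<N. norm (vec_of cf N t) powr p)" by (rule sum_nonneg) simp
  have "(\<Sum>t<N. norm (vec_of cf N t) powr p) powr (1/p) \<le> 1"
    by (rule powr_le1) (use S0 S1 assms(1) in auto)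
  then show ?thesis unfolding L .
qed

lemma ml_vec_of:
  fixes T :: "(nat \<Rightarrow> nat \<Rightarrow> 'k::real_normed_field) \<Rightarrow> 'k"
  assumes T: "multilinear_form m p T" and x: "x \<in> multi_dom m p" and j: "j < m"
  shows "T (x(j := vec_of cf N)) = (\<Sum>i<N. cf i * T (x(j := unit_vec i)))"
  unfolding vec_of_def by (rule ml_sum[OF T x j, of "{..<N}" "Suc N"]) (auto simp: unit_vec_def)

lemma B_inner:
  fixes T :: "(nat \<Rightarrow> nat \<Rightarrow> 'k::real_normed_field) \<Rightarrow> 'k"
  assumes B: "bounded_multilinear_form m p T" and pp: "\<forall>j<m. 0 < p j" and km: "Suc k = m"
    and hyp: "\<forall>x\<in>multi_dom m p. \<forall>idx. mixed_norm d n (\<lambda>ix. norm (T (upd m (Suc k) x ix))) (m - Suc k) (Suc k) idx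
               \<le> form_norm m p T * (\<Prod>j<Suc k. lp_norm (p j) (x j))"
    and x: "x \<in> multi_dom m p" and l: "\<forall>i<n k. 0 \<le> l i" "(\<Sum>i<n k. l i powr p k) \<le> 1"
  shows "(\<Sum>i<n k. (l i * Acoef m d n T x k idx i) powr 1) \<le> (form_norm m p T * (\<Prod>j<k. lp_norm (p j) (x j))) powr 1"
proof -
  have T: "multilinear_form m p T" using B unfolding bounded_multilinear_form_def by simp
  have k: "k < m" using km by simp
  define CP where "CP = form_norm m p T * (\<Prod>j<k. lp_norm (p j) (x j))"
  have CP0: "0 \<le> CP" unfolding CP_def using form_norm_nonneg[OF B]
    by (intro mult_nonneg_nonneg prod_nonneg) (auto simp: lp_norm_nonneg)
  define w where "w i = T (x(k := unit_vec i))" for i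
  have Aw: "Acoef m d n T x k idx i = norm (w i)" for i
    unfolding Acoef_def w_def using km by (simp add: upd_mm)
  define u where "u i = (if w i = 0 then 0 else of_real (norm (w i)) / w i)" for i
  have uw: "u i * w i = of_real (norm (w i))" for i unfolding u_def by auto
  have nu: "norm (u i) \<le> 1" for i unfolding u_def by (auto simp: norm_divide)
  define cf where "cf i = of_real (l i) * u i" for i
  have ncf: "norm (cf i) \<le> l i" if "i < n k" for i
  proof -
    have "norm (cf i) = l i * norm (u i)" unfolding cf_def using l that by (simp add: norm_mult)
    also have "\<dots> \<le> l i * 1" using nu[of i] l that by (intro mult_left_mono) auto
    finally show ?thesis by simp
  qed
  define v where "v = vec_of cf (n k)"
  have xv: "x(k := v) \<in> multi_dom m p" unfolding v_def using x k by (intro multi_dom_upd vec_of_lp)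
  have "T (x(k := v)) = (\<Sum>i<n k. cf i * w i)"
    unfolding v_def w_def by (rule ml_vec_of[OF T x k])
  also have "\<dots> = (\<Sum>i<n k. of_real (l i * norm (w i)))"
    by (intro sum.cong) (simp_all add: cf_def mult.assoc uw)
  also have "\<dots> = of_real (\<Sum>i<n k. l i * norm (w i))" by (rule of_real_sum[symmetric])
  finally have "norm (T (x(k := v))) = norm (of_real (\<Sum>i<n k. l i * norm (w i)) :: 'k)" by (rule arg_cong)
  then have "norm (T (x(k := v))) = \<bar>\<Sum>i<n k. l i * norm (w i)\<bar>" by (simp only: norm_of_real)
  moreover have "0 \<le> (\<Sum>i<n k. l i * norm (w i))" using l by (intro sum_nonneg) auto
  ultimately have Tv: "norm (T (x(k := v))) = (\<Sum>i<n k. l i * norm (w i))" by simp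
  have e1: "m - Suc k = 0" using km by simp
  have e2: "upd m (Suc k) y ix = y" for y :: "nat \<Rightarrow> nat \<Rightarrow> 'k" and ix using km upd_mm by metis
  have H: "mixed_norm d n (\<lambda>ix. norm (T (upd m (Suc k) (x(k := v)) ix))) (m - Suc k) (Suc k) idx
      \<le> form_norm m p T * (\<Prod>j<Suc k. lp_norm (p j) ((x(k := v)) j))" using hyp xv by blast
  have "norm (T (x(k := v))) \<le> form_norm m p T * (\<Prod>j<Suc k. lp_norm (p j) ((x(k := v)) j))"
    using H unfolding e1 e2 mixed_norm.simps(1) .
  also have "\<dots> = CP * lp_norm (p k) v" unfolding CP_def by (simp add: lessThan_Suc)
  also have "\<dots> \<le> CP * 1" using CP0 vec_of_norm[of "p k" "n k" cf l] pp k ncf l unfolding v_def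
    by (intro mult_left_mono) auto
  finally have "(\<Sum>i<n k. l i * norm (w i)) \<le> CP" using Tv by simp
  then show ?thesis using l CP0 unfolding CP_def[symmetric] Aw
    by (simp add: powr_one' abs_of_nonneg)
qed

lemma B_gen:
  fixes T :: "(nat \<Rightarrow> nat \<Rightarrow> 'k::{real_normed_field,real_inner}) \<Rightarrow> 'k"
  assumes B: "bounded_multilinear_form m p T" and pp: "\<forall>j<m. 0 < p j" and km: "Suc k < m"
    and hyp: "\<forall>x\<in>multi_dom m p. \<forall>idx. mixed_norm d n (\<lambda>ix. norm (T (upd m (Suc k) x ix))) (m - Suc k) (Suc k) idx
               \<le> form_norm m p T * (\<Prod>j<Suc k. lp_norm (p j) (x j))"
    and dl: "\<And>j. Suc k \<le> j \<Longrightarrow> j < m \<Longrightarrow> 2 \<le> d j \<and> d j \<le> d (Suc k)"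
    and x: "x \<in> multi_dom m p" and l: "\<forall>i<n k. 0 \<le> l i" "(\<Sum>i<n k. l i powr p k) \<le> 1"
  shows "(\<Sum>i<n k. (l i * Acoef m d n T x k idx i) powr d (Suc k)) \<le> (form_norm m p T * (\<Prod>j<k. lp_norm (p j) (x j))) powr d (Suc k)"
proof -
  have T: "multilinear_form m p T" using B unfolding bounded_multilinear_form_def by simp
  have k: "k < m" using km by simp
  define q where "q = d (Suc k)"
  have q: "2 \<le> q" unfolding q_def using dl[of "Suc k"] km by auto
  define CP where "CP = form_norm m p T * (\<Prod>j<k. lp_norm (p j) (x j))"
  have CP0: "0 \<le> CP" unfolding CP_def using form_norm_nonneg[OF B]
    by (intro mult_nonneg_nonneg prod_nonneg) (auto simp: lp_norm_nonneg)
  define W where "W i ix = of_real (l i) * T (upd m (Suc k) (x(k := unit_vec i)) ix)" for i ix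
  obtain \<epsilon> where \<epsilon>: "\<forall>i<n k. \<epsilon> i = 1 \<or> \<epsilon> i = -1"
    "(\<Sum>i<n k. mixed_norm d n (\<lambda>ix. norm (W i ix)) (m - Suc k) (Suc k) idx powr q) powr (1/q)
     \<le> mixed_norm d n (\<lambda>ix. norm (\<Sum>i<n k. \<epsilon> i *\<^sub>R W i ix)) (m - Suc k) (Suc k) idx"
    using cotype_max[OF q, where j="Suc k" and K="m - Suc k" and e=d and n=n and W=W and idx=idx and N="n k"] dl km
    unfolding q_def by auto
  have MW: "mixed_norm d n (\<lambda>ix. norm (W i ix)) (m - Suc k) (Suc k) idx = l i * Acoef m d n T x k idx i"
    if i: "i < n k" for i
  proof -
    have "mixed_norm d n (\<lambda>ix. norm (W i ix)) (m - Suc k) (Suc k) idx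
        = mixed_norm d n (\<lambda>ix. l i * norm (T (upd m (Suc k) (x(k := unit_vec i)) ix))) (m - Suc k) (Suc k) idx"
      unfolding W_def using l i by (simp add: norm_mult)
    also have "\<dots> = l i * Acoef m d n T x k idx i"
      unfolding Acoef_def using l i dl by (intro mn_scale) (auto, fastforce)
    finally show ?thesis .
  qed
  define cf where "cf i = (of_real (\<epsilon> i * l i) :: 'k)" for i
  define v where "v = vec_of cf (n k)"
  have xv: "x(k := v) \<in> multi_dom m p" unfolding v_def using x k by (intro multi_dom_upd vec_of_lp)
  have SW: "(\<Sum>i<n k. \<epsilon> i *\<^sub>R W i ix) = T (upd m (Suc k) (x(k := v)) ix)" for ix
  proof -
    have y: "upd m (Suc k) x ix \<in> multi_dom m p" using x by (rule upd_dom)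
    have "T (upd m (Suc k) (x(k := v)) ix) = T ((upd m (Suc k) x ix)(k := vec_of cf (n k)))"
      unfolding v_def upd_upd ..
    also have "\<dots> = (\<Sum>i<n k. cf i * T ((upd m (Suc k) x ix)(k := unit_vec i)))"
      by (rule ml_vec_of[OF T y k])
    also have "\<dots> = (\<Sum>i<n k. \<epsilon> i *\<^sub>R W i ix)"
      unfolding cf_def W_def upd_upd[symmetric] by (simp add: scaleR_conv_of_real mult.assoc)
    finally show ?thesis ..
  qed
  have ncf: "norm (cf i) \<le> l i" if "i < n k" for i
    using \<epsilon>(1) l that unfolding cf_def by (auto simp: norm_mult)
  have "mixed_norm d n (\<lambda>ix. norm (\<Sum>i<n k. \<epsilon> i *\<^sub>R W i ix)) (m - Suc k) (Suc k) idx
      = mixed_norm d n (\<lambda>ix. norm (T (upd m (Suc k) (x(k := v)) ix))) (m - Suc k) (Suc k) idx"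
    unfolding SW ..
  also have "\<dots> \<le> form_norm m p T * (\<Prod>j<Suc k. lp_norm (p j) ((x(k := v)) j))"
    using hyp xv by blast
  also have "\<dots> = CP * lp_norm (p k) v" unfolding CP_def by (simp add: lessThan_Suc)
  also have "\<dots> \<le> CP * 1" using CP0 vec_of_norm[of "p k" "n k" cf l] pp k ncf l unfolding v_def
    by (intro mult_left_mono) auto
  finally have "(\<Sum>i<n k. (l i * Acoef m d n T x k idx i) powr q) powr (1/q) \<le> CP"
    using \<epsilon>(2) MW by simp
  then have "((\<Sum>i<n k. (l i * Acoef m d n T x k idx i) powr q) powr (1/q)) powr q \<le> CP powr q"
    using q by (intro powr_mono2) auto
  then show ?thesis using q unfolding CP_def[symmetric] q_def[symmetric]
    by (simp add: powr_powr abs_of_nonneg sum_nonneg)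
qed


lemma G_all:
  fixes T :: "(nat \<Rightarrow> nat \<Rightarrow> 'k::{real_normed_field,real_inner}) \<Rightarrow> 'k"
  assumes B: "bounded_multilinear_form m p T" and pp: "\<forall>j<m. 0 < p j"
    and A1: "1 < p (m - 1)" "d (m - 1) = 1 * p (m - 1) / (p (m - 1) - 1)"
    and A2: "\<forall>l<m. 2 \<le> d l"
    and A3: "\<forall>k l. k \<le> l \<longrightarrow> l < m \<longrightarrow> d l \<le> d k"
    and A4: "\<forall>k. Suc k < m \<longrightarrow> d (Suc k) < p k \<and> d (Suc k) * p k / (p k - d (Suc k)) \<le> d k"
  shows "i \<le> m \<Longrightarrow> \<forall>x\<in>multi_dom m p. \<forall>idx. mixed_norm d n (\<lambda>ix. norm (T (upd m (m - i) x ix))) (m - (m - i)) (m - i) idx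
               \<le> form_norm m p T * (\<Prod>j<m - i. lp_norm (p j) (x j))"
proof (induction i)
  case 0
  show ?case
  proof (intro ballI allI)
    fix x :: "nat \<Rightarrow> nat \<Rightarrow> 'k" and idx assume x: "x \<in> multi_dom m p"
    show "mixed_norm d n (\<lambda>ix. norm (T (upd m (m - 0) x ix))) (m - (m - 0)) (m - 0) idx
               \<le> form_norm m p T * (\<Prod>j<m - 0. lp_norm (p j) (x j))"
      using form_norm_bound[OF B pp x] by (simp add: upd_mm)
  qed
next
  case (Suc i)
  define k where "k = m - Suc i"
  have km: "k < m" "Suc k = m - i" "m - k = Suc i" using Suc.prems unfolding k_def by auto
  have hyp: "\<forall>x\<in>multi_dom m p. \<forall>idx. mixed_norm d n (\<lambda>ix. norm (T (upd m (Suc k) x ix))) (m - Suc k) (Suc k) idx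
               \<le> form_norm m p T * (\<Prod>j<Suc k. lp_norm (p j) (x j))"
    using Suc.IH Suc.prems unfolding km(2) by simp
  have "\<forall>x\<in>multi_dom m p. \<forall>idx. mixed_norm d n (\<lambda>ix. norm (T (upd m k x ix))) (m - k) k idx
               \<le> form_norm m p T * (\<Prod>j<k. lp_norm (p j) (x j))"
  proof (cases "Suc k = m")
    case True
    have kk: "k = m - 1" using True by simp
    show ?thesis
    proof (rule G_step[OF B km(1) hyp, of 1])
      show "0 < (1::real)" "1 < p k" "0 < d k" "1 * p k / (p k - 1) \<le> d k"
        using A1 A2 km unfolding kk by auto
    next
      fix x :: "nat \<Rightarrow> nat \<Rightarrow> 'k" and idx l assume "x \<in> multi_dom m p" "\<forall>i<n k. 0 \<le> l i" "(\<Sum>i<n k. l i powr p k) \<le> 1"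
      then show "(\<Sum>i<n k. (l i * Acoef m d n T x k idx i) powr 1) \<le> (form_norm m p T * (\<Prod>j<k. lp_norm (p j) (x j))) powr 1"
        by (intro B_inner[OF B pp True hyp]) auto
    qed
  next
    case False
    then have k2: "Suc k < m" using km by simp
    show ?thesis
    proof (rule G_step[OF B km(1) hyp, of "d (Suc k)"])
      show "0 < d (Suc k)" "d (Suc k) < p k" "0 < d k" "d (Suc k) * p k / (p k - d (Suc k)) \<le> d k"
      proof -
        have a: "2 \<le> d (Suc k)" "2 \<le> d k" using A2 k2 by auto
        show "0 < d (Suc k)" "0 < d k" using a by auto
        show "d (Suc k) < p k" "d (Suc k) * p k / (p k - d (Suc k)) \<le> d k" using A4 k2 by auto
      qed
    next
      fix x :: "nat \<Rightarrow> nat \<Rightarrow> 'k" and idx l assume "x \<in> multi_dom m p" "\<forall>i<n k. 0 \<le> l i" "(\<Sum>i<n k. l i powr p k) \<le> 1"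
      then show "(\<Sum>i<n k. (l i * Acoef m d n T x k idx i) powr d (Suc k))
           \<le> (form_norm m p T * (\<Prod>j<k. lp_norm (p j) (x j))) powr d (Suc k)"
        by (intro B_gen[OF B pp k2 hyp]) (use A2 A3 in auto)
    qed
  qed
  then show ?case unfolding k_def by simp
qed

lemma upd_zero_unit: "upd m 0 (\<lambda>j t. 0) ix = unit_args m ix"
  unfolding upd_def unit_args_def by (auto simp: fun_eq_iff)

lemma upper_bound:
  fixes T :: "(nat \<Rightarrow> nat \<Rightarrow> 'k::{real_normed_field,real_inner}) \<Rightarrow> 'k"
  assumes B: "bounded_multilinear_form m p T" and pp: "\<forall>j<m. 0 < p j"
    and A1: "1 < p (m - 1)" "d (m - 1) = 1 * p (m - 1) / (p (m - 1) - 1)"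
    and A2: "\<forall>l<m. 2 \<le> d l"
    and A3: "\<forall>k l. k \<le> l \<longrightarrow> l < m \<longrightarrow> d l \<le> d k"
    and A4: "\<forall>k. Suc k < m \<longrightarrow> d (Suc k) < p k \<and> d (Suc k) * p k / (p k - d (Suc k)) \<le> d k"
    and r: "\<forall>k<m. 0 < r k" and n: "\<forall>k<m. 1 \<le> n k"
  shows "mixed_norm r n (\<lambda>idx. norm (T (unit_args m idx))) m 0 (\<lambda>_. 0)
     \<le> 1 * form_norm m p T * (\<Prod>k<m. real (n k) powr max (1 / r k - 1 / d k) 0)"
proof -
  have G0: "mixed_norm d n (\<lambda>ix. norm (T (upd m (m - m) (\<lambda>j t. 0) ix))) (m - (m - m)) (m - m) (\<lambda>_. 0)
      \<le> form_norm m p T * (\<Prod>j<m - m. lp_norm (p j) ((\<lambda>j t. 0::'k) j))"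
    using G_all[OF B pp A1 A2 A3 A4, of m n] zero_dom by blast
  then have G0': "mixed_norm d n (\<lambda>ix. norm (T (unit_args m ix))) m 0 (\<lambda>_. 0) \<le> form_norm m p T"
    by (simp add: upd_zero_unit)
  have "mixed_norm r n (\<lambda>idx. norm (T (unit_args m idx))) m 0 (\<lambda>_. 0)
      \<le> (\<Prod>l\<in>{0..<0+m}. real (n l) powr max (1 / r l - 1 / d l) 0) * mixed_norm d n (\<lambda>idx. norm (T (unit_args m idx))) m 0 (\<lambda>_. 0)"
  proof (rule mn_reduce)
    fix l assume "0 \<le> l" "l < 0 + m"
    then show "0 < r l \<and> 0 < d l \<and> 1 \<le> n l" using r n A2 by force
  qed simp
  also have "\<dots> \<le> (\<Prod>l\<in>{0..<0+m}. real (n l) powr max (1 / r l - 1 / d l) 0) * form_norm m p T"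
    using G0' by (intro mult_left_mono prod_nonneg) auto
  finally show ?thesis by (simp add: atLeast0LessThan mult.commute)
qed


definition ssum :: "(nat \<Rightarrow> real) \<Rightarrow> nat \<Rightarrow> nat \<Rightarrow> real" where
  "ssum p l m = (\<Sum>j\<in>{l..<m}. 1 / p j)"

lemma hb_delta_ssum: "hb_delta p l m = 1 / (1 - ssum p l m)"
  unfolding hb_delta_def ssum_def ..

locale hyp_setting =
  fixes m :: nat and p :: "nat \<Rightarrow> real"
  assumes m2: "m \<ge> 2" and pm: "1 < p (m - 1)" "p (m - 1) \<le> 2"
    and pj: "\<forall>j<m - 1. 2 < p j" and hs: "(\<Sum>j<m. 1 / p j) < 1"
begin

lemma pp: "\<forall>j<m. 0 < p j"
proof (intro allI impI)
  fix j assume "j < m"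
  show "0 < p j"
  proof (cases "j < m - 1")
    case True then show ?thesis using pj by force
  next
    case False then have "j = m - 1" using \<open>j < m\<close> by arith
    then show ?thesis using pm by simp
  qed
qed

lemma ssum_nonneg: "0 \<le> ssum p l m"
  unfolding ssum_def using pp by (intro sum_nonneg) auto

lemma ssum_lt1: "ssum p l m < 1"
proof -
  have "ssum p l m \<le> (\<Sum>j<m. 1 / p j)"
    unfolding ssum_def using pp by (intro sum_mono2) auto
  then show ?thesis using hs by simp
qed

lemma ssum_mono: "k \<le> l \<Longrightarrow> ssum p l m \<le> ssum p k m"
  unfolding ssum_def using pp by (intro sum_mono2) auto

lemma ssum_ge: "l < m \<Longrightarrow> 1 / p (m - 1) \<le> ssum p l m"
  unfolding ssum_def using pp m2 by (intro member_le_sum) auto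

lemma ssum_last: "ssum p (m - 1) m = 1 / p (m - 1)"
proof -
  have "{m - 1..<m} = {m - 1}" using m2 by auto
  then show ?thesis unfolding ssum_def by simp
qed

lemma ssum_Suc: "k < m \<Longrightarrow> ssum p k m = 1 / p k + ssum p (Suc k) m"
  unfolding ssum_def by (simp add: sum.atLeast_Suc_lessThan)

abbreviation "dd \<equiv> (\<lambda>l. hb_delta p l m)"

lemma A1: "dd (m - 1) = 1 * p (m - 1) / (p (m - 1) - 1)"
  unfolding hb_delta_ssum ssum_last using pm by (simp add: field_simps)

lemma A2: "\<forall>l<m. 2 \<le> dd l"
proof (intro allI impI)
  fix l assume l: "l < m"
  have "1/2 \<le> 1 / p (m - 1)" using pm by (simp add: field_simps)
  then have "1/2 \<le> ssum p l m" using ssum_ge[OF l] by simp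
  then show "2 \<le> dd l" unfolding hb_delta_ssum using ssum_lt1[of l] by (simp add: field_simps)
qed

lemma A3: "\<forall>k l. k \<le> l \<longrightarrow> l < m \<longrightarrow> dd l \<le> dd k"
proof (intro allI impI)
  fix k l :: nat assume "k \<le> l" "l < m"
  then have "ssum p l m \<le> ssum p k m" using ssum_mono by blast
  then show "dd l \<le> dd k" unfolding hb_delta_ssum using ssum_lt1[of k] ssum_lt1[of l]
    by (intro divide_left_mono) auto
qed

lemma A4: "\<forall>k. Suc k < m \<longrightarrow> dd (Suc k) < p k \<and> dd (Suc k) * p k / (p k - dd (Suc k)) \<le> dd k"
proof (intro allI impI)
  fix k assume k: "Suc k < m"
  define s where "s = ssum p (Suc k) m"
  have pk: "0 < p k" using pp k by auto
  have sk: "ssum p k m = 1 / p k + s" unfolding s_def using k by (intro ssum_Suc) auto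
  have s1: "1 / p k + s < 1" using ssum_lt1[of k] sk by simp
  have s0: "s < 1" unfolding s_def by (rule ssum_lt1)
  have lt: "1 / (1 - s) < p k"
    using s1 s0 pk by (simp add: field_simps)
  moreover have "1 / (1 - s) * p k / (p k - 1 / (1 - s)) = 1 / (1 - (1 / p k + s))"
  proof -
    define q where "q = (1 - s) * p k - 1"
    have q0: "0 < q" unfolding q_def using s1 pk by (simp add: field_simps)
    have u0: "0 < 1 - s" using s0 by simp
    have e1: "p k - 1 / (1 - s) = q / (1 - s)" unfolding q_def using u0 by (simp add: field_simps)
    have e2: "1 - (1 / p k + s) = q / p k" unfolding q_def using pk by (simp add: field_simps)
    show ?thesis unfolding e1 e2 using u0 q0 pk by (simp add: field_simps)
  qed
  ultimately show "dd (Suc k) < p k \<and> dd (Suc k) * p k / (p k - dd (Suc k)) \<le> dd k"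
    unfolding hb_delta_ssum sk s_def[symmetric] by simp
qed

end


lemma wamgm:
  fixes z w :: "nat \<Rightarrow> real"
  assumes J: "finite J" and c: "0 < c" and w0: "0 \<le> w0" and w: "\<forall>j\<in>J. 0 \<le> w j"
    and ws: "w0 + (\<Sum>j\<in>J. w j) = 1" and z: "\<forall>j\<in>J. 0 \<le> z j" and a: "a \<notin> J"
  shows "c powr w0 * (\<Prod>j\<in>J. z j powr w j) \<le> w0 * c + (\<Sum>j\<in>J. w j * z j)"
proof (cases "\<exists>j\<in>J. z j = 0")
  case True
  then have "(\<Prod>j\<in>J. z j powr w j) = 0" using J by auto
  moreover have "0 \<le> w0 * c + (\<Sum>j\<in>J. w j * z j)" using w0 c w z by (intro add_nonneg_nonneg sum_nonneg) auto
  ultimately show ?thesis by simp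
next
  case False
  then have zp: "\<forall>j\<in>J. 0 < z j" using z by force
  define aa where "aa = w(a := w0)"
  define t where "t = (\<lambda>j. ln (z j))(a := ln c)"
  have S: "finite (insert a J)" "insert a J \<noteq> {}" using J by auto
  have aJ: "aa j = w j" "t j = ln (z j)" if "j \<in> J" for j using that a unfolding aa_def t_def by auto
  have aa: "aa a = w0" "t a = ln c" unfolding aa_def t_def by auto
  have "exp (\<Sum>j\<in>insert a J. aa j *\<^sub>R t j) \<le> (\<Sum>j\<in>insert a J. aa j * exp (t j))"
  proof (rule convex_on_sum[OF S exp_convex])
    have "(\<Sum>j\<in>insert a J. aa j) = aa a + (\<Sum>j\<in>J. aa j)" by (rule sum.insert[OF J a])
    also have "(\<Sum>j\<in>J. aa j) = (\<Sum>j\<in>J. w j)" using aJ by (intro sum.cong) auto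
    finally show "(\<Sum>j\<in>insert a J. aa j) = 1" using ws aa by simp
    show "\<And>i. i \<in> insert a J \<Longrightarrow> 0 \<le> aa i" using w w0 aJ aa by auto
  qed auto
  moreover have "(\<Sum>j\<in>insert a J. aa j *\<^sub>R t j) = w0 * ln c + (\<Sum>j\<in>J. w j * ln (z j))"
  proof -
    have "(\<Sum>j\<in>insert a J. aa j *\<^sub>R t j) = aa a *\<^sub>R t a + (\<Sum>j\<in>J. aa j *\<^sub>R t j)" by (rule sum.insert[OF J a])
    also have "(\<Sum>j\<in>J. aa j *\<^sub>R t j) = (\<Sum>j\<in>J. w j * ln (z j))" using aJ by (intro sum.cong) auto
    finally show ?thesis using aa by simp
  qed
  moreover have "(\<Sum>j\<in>insert a J. aa j * exp (t j)) = w0 * c + (\<Sum>j\<in>J. w j * z j)"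
  proof -
    have "(\<Sum>j\<in>insert a J. aa j * exp (t j)) = aa a * exp (t a) + (\<Sum>j\<in>J. aa j * exp (t j))" by (rule sum.insert[OF J a])
    also have "(\<Sum>j\<in>J. aa j * exp (t j)) = (\<Sum>j\<in>J. w j * z j)" using aJ zp by (intro sum.cong) auto
    finally show ?thesis using aa c by simp
  qed
  moreover have "exp (w0 * ln c + (\<Sum>j\<in>J. w j * ln (z j))) = c powr w0 * (\<Prod>j\<in>J. z j powr w j)"
  proof -
    have "exp (w0 * ln c + (\<Sum>j\<in>J. w j * ln (z j))) = exp (w0 * ln c) * (\<Prod>j\<in>J. exp (w j * ln (z j)))"
      using J by (simp add: exp_add exp_sum)
    also have "\<dots> = c powr w0 * (\<Prod>j\<in>J. z j powr w j)"
      using c zp by (auto simp: powr_def intro!: prod.cong)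
    finally show ?thesis .
  qed
  ultimately show ?thesis by simp
qed

definition gidx :: "nat \<Rightarrow> nat \<Rightarrow> nat \<Rightarrow> nat" where
  "gidx k j i = (if j < k then 0 else i)"

definition Tdiag :: "nat \<Rightarrow> nat \<Rightarrow> nat \<Rightarrow> (nat \<Rightarrow> nat \<Rightarrow> 'k::real_normed_field) \<Rightarrow> 'k" where
  "Tdiag m k M x = (\<Sum>i<M. \<Prod>j<m. x j (gidx k j i))"

lemma prod_split1:
  fixes x :: "nat \<Rightarrow> nat \<Rightarrow> 'k::real_normed_field"
  assumes "j0 < m"
  shows "(\<Prod>j<m. x j (g j)) = x j0 (g j0) * (\<Prod>j\<in>{..<m} - {j0}. x j (g j))"
  using assms by (subst prod.remove[of "{..<m}" j0]) auto

lemma prod_upd1: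
  fixes x :: "nat \<Rightarrow> nat \<Rightarrow> 'k::real_normed_field"
  assumes "j0 < m"
  shows "(\<Prod>j<m. (x(j0 := f)) j (g j)) = f (g j0) * (\<Prod>j\<in>{..<m} - {j0}. x j (g j))"
proof -
  have "(\<Prod>j<m. (x(j0 := f)) j (g j)) = (x(j0 := f)) j0 (g j0) * (\<Prod>j\<in>{..<m} - {j0}. (x(j0 := f)) j (g j))"
    by (rule prod_split1[OF assms])
  also have "(\<Prod>j\<in>{..<m} - {j0}. (x(j0 := f)) j (g j)) = (\<Prod>j\<in>{..<m} - {j0}. x j (g j))"
    by (intro prod.cong) auto
  finally show ?thesis by simp
qed

lemma Tdiag_ml: "multilinear_form m p (Tdiag m k M :: (nat \<Rightarrow> nat \<Rightarrow> 'k::real_normed_field) \<Rightarrow> 'k)"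
  unfolding multilinear_form_def
proof (intro conjI ballI allI impI)
  fix x :: "nat \<Rightarrow> nat \<Rightarrow> 'k" and j :: nat and y :: "nat \<Rightarrow> 'k"
  assume j: "j < m"
  define R where "R i = (\<Prod>l\<in>{..<m} - {j}. x l (gidx k l i))" for i
  have Tx: "Tdiag m k M x = (\<Sum>i<M. x j (gidx k j i) * R i)"
    unfolding Tdiag_def R_def using prod_split1[OF j, of x] by simp
  show "Tdiag m k M (x(j := (\<lambda>t. x j t + y t))) = Tdiag m k M x + Tdiag m k M (x(j := y))"
    unfolding Tx unfolding Tdiag_def prod_upd1[OF j] R_def[symmetric]
    by (simp add: distrib_right sum.distrib)
next
  fix x :: "nat \<Rightarrow> nat \<Rightarrow> 'k" and j :: nat and c :: 'k
  assume j: "j < m"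
  define R where "R i = (\<Prod>l\<in>{..<m} - {j}. x l (gidx k l i))" for i
  have Tx: "Tdiag m k M x = (\<Sum>i<M. x j (gidx k j i) * R i)"
    unfolding Tdiag_def R_def using prod_split1[OF j, of x] by simp
  show "Tdiag m k M (x(j := (\<lambda>t. c * x j t))) = c * Tdiag m k M x"
    unfolding Tx unfolding Tdiag_def prod_upd1[OF j] R_def[symmetric]
    by (simp add: sum_distrib_left mult.assoc)
qed

lemma Tdiag_bounded:
  assumes pp: "\<forall>j<m. 0 < p j"
  shows "bounded_multilinear_form m p (Tdiag m k M :: (nat \<Rightarrow> nat \<Rightarrow> 'k::real_normed_field) \<Rightarrow> 'k)"
  unfolding bounded_multilinear_form_def
proof (intro conjI Tdiag_ml exI ballI)
  fix x :: "nat \<Rightarrow> nat \<Rightarrow> 'k" assume x: "x \<in> multi_dom m p"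
  have "norm (Tdiag m k M x) \<le> (\<Sum>i<M. norm (\<Prod>j<m. x j (gidx k j i)))"
    unfolding Tdiag_def by (rule norm_sum)
  also have "\<dots> \<le> (\<Sum>i<M. \<Prod>j<m. lp_norm (p j) (x j))"
    unfolding prod_norm[symmetric]
    using x pp by (intro sum_mono prod_mono) (auto intro: lp_coord multi_dom_lp)
  also have "\<dots> = real M * (\<Prod>j<m. lp_norm (p j) (x j))" by simp
  finally show "norm (Tdiag m k M x) \<le> real M * (\<Prod>j<m. lp_norm (p j) (x j))" .
qed


lemma diag_norm:
  assumes pp: "\<forall>j<m. 0 < p j" and k: "k < m" and M: "1 \<le> M" and S: "ssum p k m < 1"
  shows "form_norm m p (Tdiag m k M :: (nat \<Rightarrow> nat \<Rightarrow> 'k::real_normed_field) \<Rightarrow> 'k) \<le> real M powr (1 - ssum p k m)"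
  unfolding form_norm_def
proof (rule cSUP_least)
  show "{x :: nat \<Rightarrow> nat \<Rightarrow> 'k. x \<in> multi_dom m p \<and> (\<forall>j<m. lp_norm (p j) (x j) \<le> 1)} \<noteq> {}"
    using zero_dom[of m p] by (auto simp: lp_norm_zero_vec)
next
  fix x :: "nat \<Rightarrow> nat \<Rightarrow> 'k" assume "x \<in> {x \<in> multi_dom m p. \<forall>j<m. lp_norm (p j) (x j) \<le> 1}"
  then have x: "x \<in> multi_dom m p" and x1: "\<forall>j<m. lp_norm (p j) (x j) \<le> 1" by auto
  define J where "J = {k..<m}"
  define w0 where "w0 = 1 - ssum p k m"
  have w0: "0 \<le> w0" using S unfolding w0_def by simp
  have JS: "ssum p k m = (\<Sum>j\<in>J. 1 / p j)" unfolding J_def ssum_def ..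
  define y where "y j i = norm (x j i)" for j i
  have y0: "0 \<le> y j i" for j i unfolding y_def by simp
  have "norm (Tdiag m k M x) \<le> (\<Sum>i<M. \<Prod>j<m. y j (gidx k j i))"
    unfolding Tdiag_def y_def by (rule order_trans[OF norm_sum]) (simp add: prod_norm)
  also have "\<dots> \<le> (\<Sum>i<M. \<Prod>j\<in>J. y j i)"
  proof (rule sum_mono)
    fix i
    have "(\<Prod>j<m. y j (gidx k j i)) = (\<Prod>j\<in>{0..<k}. y j (gidx k j i)) * (\<Prod>j\<in>{k..<m}. y j (gidx k j i))"
      using k by (simp add: prod.atLeastLessThan_concat atLeast0LessThan[symmetric])
    also have "(\<Prod>j\<in>{k..<m}. y j (gidx k j i)) = (\<Prod>j\<in>J. y j i)"
      unfolding J_def gidx_def by (intro prod.cong) auto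
    also have "(\<Prod>j\<in>{0..<k}. y j (gidx k j i)) \<le> 1"
    proof (rule prod_le_1)
      fix j assume j: "j \<in> {0..<k}"
      then have jm: "j < m" using k by simp
      have "y j (gidx k j i) \<le> lp_norm (p j) (x j)" unfolding y_def using pp jm
        by (intro lp_coord multi_dom_lp[OF x jm]) auto
      moreover have "lp_norm (p j) (x j) \<le> 1" using x1 jm by simp
      ultimately show "0 \<le> y j (gidx k j i) \<and> y j (gidx k j i) \<le> 1" using y0[of j "gidx k j i"] by linarith
    qed
    then have "(\<Prod>j\<in>{0..<k}. y j (gidx k j i)) * (\<Prod>j\<in>J. y j i) \<le> 1 * (\<Prod>j\<in>J. y j i)"
      by (intro mult_right_mono prod_nonneg y0) auto
    finally show "(\<Prod>j<m. y j (gidx k j i)) \<le> (\<Prod>j\<in>J. y j i)" by simp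
  qed
  also have "\<dots> \<le> real M powr w0"
  proof -
    have Mp: "0 < real M" using M by simp
    have am: "(1 / real M) powr w0 * (\<Prod>j\<in>J. y j i) \<le> w0 * (1 / real M) + (\<Sum>j\<in>J. (1 / p j) * y j i powr p j)" for i
    proof -
      have "(1 / real M) powr w0 * (\<Prod>j\<in>J. (y j i powr p j) powr (1 / p j))
          \<le> w0 * (1 / real M) + (\<Sum>j\<in>J. (1 / p j) * y j i powr p j)"
      proof (rule wamgm[where a = m])
        show "w0 + (\<Sum>j\<in>J. 1 / p j) = 1" unfolding w0_def JS by simp
      qed (use w0 Mp pp J_def in auto)
      moreover have "(\<Prod>j\<in>J. (y j i powr p j) powr (1 / p j)) = (\<Prod>j\<in>J. y j i)"
        using pp y0 unfolding J_def by (intro prod.cong refl) (simp add: powr_inv_cancel)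
      ultimately show ?thesis by simp
    qed
    have "(1 / real M) powr w0 * (\<Sum>i<M. \<Prod>j\<in>J. y j i) = (\<Sum>i<M. (1 / real M) powr w0 * (\<Prod>j\<in>J. y j i))"
      by (simp add: sum_distrib_left)
    also have "\<dots> \<le> (\<Sum>i<M. w0 * (1 / real M) + (\<Sum>j\<in>J. (1 / p j) * y j i powr p j))"
      by (intro sum_mono am)
    also have "\<dots> = w0 + (\<Sum>j\<in>J. (1 / p j) * (\<Sum>i<M. y j i powr p j))"
      using Mp by (simp add: sum.distrib sum_distrib_left sum.swap[of _ J])
    also have "\<dots> \<le> w0 + (\<Sum>j\<in>J. (1 / p j) * 1)"
    proof -
      have "(1 / p j) * (\<Sum>i<M. y j i powr p j) \<le> (1 / p j) * 1" if j: "j \<in> J" for j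
      proof (rule mult_left_mono)
        have jm: "j < m" using j unfolding J_def by simp
        show "(\<Sum>i<M. y j i powr p j) \<le> 1" unfolding y_def
          using lp_norm_le1_sum[of "p j" "x j" "{..<M}"] x x1 pp jm multi_dom_lp by blast
        show "0 \<le> 1 / p j" using pp jm by (simp add: less_imp_le)
      qed
      then show ?thesis by (intro add_left_mono sum_mono) auto
    qed
    also have "\<dots> = 1" unfolding w0_def JS by simp
    finally have "(1 / real M) powr w0 * (\<Sum>i<M. \<Prod>j\<in>J. y j i) \<le> 1" .
    then have "(\<Sum>i<M. \<Prod>j\<in>J. y j i) \<le> real M powr w0"
      using Mp by (simp add: powr_divide divide_le_eq mult.commute)
    then show ?thesis .
  qed
  finally show "norm (Tdiag m k M x) \<le> real M powr (1 - ssum p k m)" unfolding w0_def .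
qed


lemma diag_val:
  assumes k: "k < m" and i0: "\<forall>l<k. idx l = 0" and i1: "\<forall>l. k \<le> l \<and> l < m \<longrightarrow> idx l = i0" and iM': "i0 < M"
  shows "norm (Tdiag m k M (unit_args m idx) :: 'k::real_normed_field) = 1"
proof -
  have ik: "idx k = i0" using i1 k by blast
  have iM: "idx k < M" using ik iM' by simp
  have pr: "(\<Prod>j<m. (unit_args m idx j (gidx k j i) :: 'k)) = (if i = idx k then 1 else 0)" for i
  proof (cases "i = idx k")
    case True
    have "(\<Prod>j<m. (unit_args m idx j (gidx k j i) :: 'k)) = (\<Prod>j<m. 1)"
    proof (rule prod.cong[OF refl])
      fix j assume "j \<in> {..<m}"
      then show "(unit_args m idx j (gidx k j i) :: 'k) = 1"
      proof (cases "j < k")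
        case True then show ?thesis using i0 \<open>j \<in> {..<m}\<close> unfolding unit_args_def unit_vec_def gidx_def by simp
      next
        case False
        then have "k \<le> j \<and> j < m" using \<open>j \<in> {..<m}\<close> by simp
        then have "idx j = idx k" using i1 ik by metis
        then show ?thesis using False \<open>i = idx k\<close> \<open>j \<in> {..<m}\<close> unfolding unit_args_def unit_vec_def gidx_def by simp
      qed
    qed
    then show ?thesis using True by simp
  next
    case False
    have "(unit_args m idx k (gidx k k i) :: 'k) = 0" using False k by (simp add: unit_args_def unit_vec_def gidx_def)
    then have "(\<Prod>j<m. (unit_args m idx j (gidx k j i) :: 'k)) = 0"
      by (rule prod_zero[OF finite_lessThan bexI[of _ k]]) (use k in simp)
    then show ?thesis using False by simp
  qed
  have "Tdiag m k M (unit_args m idx) = (\<Sum>i<M. (if i = idx k then 1 else 0 :: 'k))"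
    unfolding Tdiag_def pr ..
  also have "\<dots> = 1" using iM by (simp add: sum.delta')
  finally show ?thesis by simp
qed
lemma diag_lower:
  fixes r :: "nat \<Rightarrow> real"
  assumes k: "k < m" and M: "1 \<le> M" "M \<le> N" and r: "\<forall>j<m. 0 < r j"
  defines "a \<equiv> (\<lambda>idx. norm (Tdiag m k M (unit_args m idx) :: 'k::real_normed_field))"
    and "n' \<equiv> (\<lambda>j. if j < k then 1 else N)"
  shows "\<forall>j idx i0. j + K = m \<longrightarrow> (\<forall>l<min j k. idx l = 0) \<longrightarrow>
     (k < j \<longrightarrow> (\<forall>l. k \<le> l \<and> l < j \<longrightarrow> idx l = i0) \<and> i0 < M) \<longrightarrow>
     (if k < j then 1 else real M powr (1 / r k)) \<le> mixed_norm r n' a K j idx"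
proof (induction K)
  case 0
  show ?case
  proof (intro allI impI)
    fix j idx i0 assume j: "j + 0 = m" and c0: "\<forall>l<min j k. idx l = 0"
      and c1: "k < j \<longrightarrow> (\<forall>l. k \<le> l \<and> l < j \<longrightarrow> idx l = i0) \<and> i0 < M"
    have jm: "j = m" using j by simp
    have "a idx = 1" unfolding a_def
    proof (rule diag_val[OF k, of idx i0])
      show "\<forall>l<k. idx l = 0" using c0 jm k by simp
      show "\<forall>l. k \<le> l \<and> l < m \<longrightarrow> idx l = i0" "i0 < M" using c1 jm k by auto
    qed
    then show "(if k < j then 1 else real M powr (1 / r k)) \<le> mixed_norm r n' a 0 j idx"
      using jm k by simp
  qed
next
  case (Suc K)
  show ?case
  proof (intro allI impI)
    fix j idx i0 assume j: "j + Suc K = m" and c0: "\<forall>l<min j k. idx l = 0"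
      and c1: "k < j \<longrightarrow> (\<forall>l. k \<le> l \<and> l < j \<longrightarrow> idx l = i0) \<and> i0 < M"
    define MM where "MM i = mixed_norm r n' a K (Suc j) (idx(j := i))" for i
    have MM0: "0 \<le> MM i" for i unfolding MM_def a_def by (rule mn_nonneg) simp
    have rj: "0 < r j" using r j by auto
    have eq: "mixed_norm r n' a (Suc K) j idx = (\<Sum>i<n' j. MM i powr r j) powr (1 / r j)"
      unfolding MM_def by simp
    have jm: "Suc j + K = m" using j by simp
    consider "k < j" | "k = j" | "j < k" by arith
    then show "(if k < j then 1 else real M powr (1 / r k)) \<le> mixed_norm r n' a (Suc K) j idx"
    proof cases
      case 1
      have i0M: "i0 < M" using c1 1 by simp
      have HA: "\<forall>l<min (Suc j) k. (idx(j := i0)) l = 0" using c0 1 by auto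

      have HB: "k < Suc j \<longrightarrow> (\<forall>l. k \<le> l \<and> l < Suc j \<longrightarrow> (idx(j := i0)) l = i0) \<and> i0 < M" using c1 1 by (auto simp: less_Suc_eq)

      have "(if k < Suc j then 1 else real M powr (1 / r k)) \<le> MM i0" unfolding MM_def

        using Suc.IH[THEN spec[of _ "Suc j"], THEN spec[of _ "idx(j := i0)"], THEN spec[of _ "i0"]] jm HA HB by blast
      then have "1 \<le> MM i0" using 1 by simp
      then have "1 powr r j \<le> MM i0 powr r j" using rj by (intro powr_mono2) auto
      then have "1 \<le> MM i0 powr r j" by simp
      also have "\<dots> \<le> (\<Sum>i<n' j. MM i powr r j)"
        using i0M 1 M unfolding n'_def by (intro member_le_sum) auto
      finally have "1 \<le> (\<Sum>i<n' j. MM i powr r j)" .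
      then have "1 powr (1 / r j) \<le> (\<Sum>i<n' j. MM i powr r j) powr (1 / r j)"
        using rj by (intro powr_mono2) auto
      then show ?thesis using 1 eq by simp
    next
      case 2
      have ge1: "1 \<le> MM i" if iM: "i < M" for i
      proof -
        have HA: "\<forall>l<min (Suc j) k. (idx(j := i)) l = 0" using c0 2 by auto

        have HB: "k < Suc j \<longrightarrow> (\<forall>l. k \<le> l \<and> l < Suc j \<longrightarrow> (idx(j := i)) l = i) \<and> i < M" using 2 iM by (auto simp: less_Suc_eq)

        have "(if k < Suc j then 1 else real M powr (1 / r k)) \<le> MM i" unfolding MM_def

          using Suc.IH[THEN spec[of _ "Suc j"], THEN spec[of _ "idx(j := i)"], THEN spec[of _ "i"]] jm HA HB by blast
        then show ?thesis using 2 by simp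
      qed
      have "real M = (\<Sum>i<M. 1 powr r j)" by simp
      also have "\<dots> \<le> (\<Sum>i<M. MM i powr r j)"
        using ge1 rj by (intro sum_mono powr_mono2) auto
      also have "\<dots> \<le> (\<Sum>i<n' j. MM i powr r j)"
        using M 2 unfolding n'_def by (intro sum_mono2) auto
      finally have "real M powr (1 / r j) \<le> (\<Sum>i<n' j. MM i powr r j) powr (1 / r j)"
        using rj by (intro powr_mono2) auto
      then show ?thesis using 2 eq by simp
    next
      case 3
      have HA: "\<forall>l<min (Suc j) k. (idx(j := 0)) l = 0" using c0 3 by (auto simp: less_Suc_eq)

      have HB: "k < Suc j \<longrightarrow> (\<forall>l. k \<le> l \<and> l < Suc j \<longrightarrow> (idx(j := 0)) l = 0) \<and> 0 < M" using 3 by auto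

      have "(if k < Suc j then 1 else real M powr (1 / r k)) \<le> MM 0" unfolding MM_def

        using Suc.IH[THEN spec[of _ "Suc j"], THEN spec[of _ "idx(j := 0)"], THEN spec[of _ "0"]] jm HA HB by blast
      then have "real M powr (1 / r k) \<le> MM 0" using 3 by simp
      moreover have "(\<Sum>i<n' j. MM i powr r j) powr (1 / r j) = MM 0"
        using 3 rj MM0[of 0] unfolding n'_def by (simp add: powr_powr)
      ultimately show ?thesis using 3 eq by simp
    qed
  qed
qed

lemma unbounded_powr:
  assumes "0 < e" shows "\<exists>N::nat. 1 \<le> N \<and> D < real N powr e"
proof -
  define N where "N = Suc (nat \<lceil>D powr (1 / e)\<rceil>)"
  have "D powr (1 / e) < real N" unfolding N_def by linarith
  then have "(D powr (1 / e)) powr e < real N powr e"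
    using assms by (intro powr_less_mono2) auto
  moreover have "(D powr (1 / e)) powr e = \<bar>D\<bar>" using assms by (simp add: powr_powr powr_one')
  ultimately have "D < real N powr e" by linarith
  moreover have "1 \<le> N" unfolding N_def by simp
  ultimately show ?thesis by blast
qed


lemma opt_prod:
  assumes k: "k < m" and N: "1 \<le> N" and r: "\<forall>j<m. 0 < r j"
    and cond: "\<forall>j. k < j \<and> j < m \<longrightarrow> 0 < hb_delta p j m \<and> hb_delta p j m \<le> r j"
  shows "(\<Prod>j<m. real (if j < k then 1 else N) powr ((hb_exp p r m)(k := s')) j) = real N powr s'"
proof -
  have "(\<Prod>j<m. real (if j < k then 1 else N) powr ((hb_exp p r m)(k := s')) j)
      = (\<Prod>j<m. if j = k then real N powr s' else 1)"
  proof (rule prod.cong[OF refl])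
    fix j assume j: "j \<in> {..<m}"
    show "real (if j < k then 1 else N) powr ((hb_exp p r m)(k := s')) j = (if j = k then real N powr s' else 1)"
    proof (cases "j = k")
      case True then show ?thesis by simp
    next
      case False
      show ?thesis
      proof (cases "j < k")
        case True then show ?thesis using False by simp
      next
        case jk: False
        then have kj: "k < j \<and> j < m" using False j by simp
        then have "0 < hb_delta p j m" "hb_delta p j m \<le> r j" using cond by auto
        then have "1 / r j \<le> 1 / hb_delta p j m" by (intro divide_left_mono) auto
        then have "hb_exp p r m j = 0" unfolding hb_exp_def by simp
        then show ?thesis using False jk N by simp
      qed
    qed
  qed
  also have "\<dots> = real N powr s'" using k by (simp add: prod.delta)
  finally show ?thesis .
qed

lemma optimal:
  fixes r :: "nat \<Rightarrow> real" and s' :: real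
  assumes pp: "\<forall>j<m. 0 < p j" and Sk: "ssum p k m < 1"
    and r: "\<forall>j<m. 0 < r j" and k: "k < m"
    and cond: "\<forall>j. k < j \<and> j < m \<longrightarrow> 0 < hb_delta p j m \<and> hb_delta p j m \<le> r j"
    and s': "s' < hb_exp p r m k"
  shows "\<not> (\<exists>D. HB_ineq TYPE('k::real_normed_field) m p r D ((hb_exp p r m)(k := s')))"
proof
  assume "\<exists>D. HB_ineq TYPE('k) m p r D ((hb_exp p r m)(k := s'))"
  then obtain D where HB: "HB_ineq TYPE('k) m p r D ((hb_exp p r m)(k := s'))" by blast
  define w0 where "w0 = 1 - ssum p k m"
  have key: "real M powr (1 / r k) \<le> D * (real M powr w0 * real N powr s')" if M: "1 \<le> M" "M \<le> N" for M N
  proof -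
    define n' where "n' = (\<lambda>j. if j < k then 1 else N)"
    define T where "T = (Tdiag m k M :: (nat \<Rightarrow> nat \<Rightarrow> 'k) \<Rightarrow> 'k)"
    have Tb: "bounded_multilinear_form m p T" unfolding T_def by (rule Tdiag_bounded[OF pp])
    have n1: "\<forall>j<m. 1 \<le> n' j" unfolding n'_def using M by auto
    have up: "mixed_norm r n' (\<lambda>idx. norm (T (unit_args m idx))) m 0 (\<lambda>_. 0)
        \<le> D * form_norm m p T * (\<Prod>j<m. real (n' j) powr ((hb_exp p r m)(k := s')) j)"
      using HB n1 Tb unfolding HB_ineq_def by blast
    have P: "(\<Prod>j<m. real (n' j) powr ((hb_exp p r m)(k := s')) j) = real N powr s'"
      unfolding n'_def using opt_prod[OF k _ r cond, of N s'] M by simp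
    have low: "real M powr (1 / r k) \<le> mixed_norm r n' (\<lambda>idx. norm (T (unit_args m idx))) m 0 (\<lambda>_. 0)"
      using diag_lower[OF k M r, where K = m, THEN spec[of _ 0], THEN spec[of _ "\<lambda>_. 0"], THEN spec[of _ 0]]
      unfolding T_def n'_def by simp
    have fn: "0 \<le> form_norm m p T" "form_norm m p T \<le> real M powr w0"
      using form_norm_nonneg[OF Tb] diag_norm[OF pp k M(1) Sk] unfolding T_def w0_def by auto
    have Mpos: "0 < real M powr (1 / r k)" using M by simp
    have Np: "0 \<le> real N powr s'" by simp
    have chain: "real M powr (1 / r k) \<le> D * form_norm m p T * real N powr s'"
      using up low unfolding P by simp
    have D0: "0 \<le> D"
    proof (rule ccontr)
      assume "\<not> 0 \<le> D"
      then have "D * form_norm m p T * real N powr s' \<le> 0"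
        using fn Np by (simp add: mult_nonneg_nonneg mult_nonpos_nonneg)
      then show False using chain Mpos by linarith
    qed
    have "D * form_norm m p T * real N powr s' \<le> D * (real M powr w0 * real N powr s')"
      using D0 fn Np by (simp add: mult.assoc mult_left_mono mult_right_mono)
    then show ?thesis using chain by simp
  qed
  have hb: "hb_exp p r m k = max (1 / r k - w0) 0"
    unfolding hb_exp_def w0_def hb_delta_ssum by simp
  obtain e where e: "0 < e" "\<And>N. 1 \<le> N \<Longrightarrow> real N powr e \<le> D"
  proof (cases "0 < 1 / r k - w0")
    case True
    then have sl: "s' < 1 / r k - w0" using s' hb by simp
    show ?thesis
    proof (rule that[of "1 / r k - w0 - s'"])
      show "0 < 1 / r k - w0 - s'" using sl by simp
      fix N :: nat assume N: "1 \<le> N"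
      have Np: "0 < real N" using N by simp
      have "real N powr (1 / r k - w0 - s') * (real N powr w0 * real N powr s') = real N powr (1 / r k)"
        by (simp add: powr_add[symmetric])
      also have "\<dots> \<le> D * (real N powr w0 * real N powr s')" using key[OF N order.refl] .
      finally show "real N powr (1 / r k - w0 - s') \<le> D" using Np by simp
    qed
  next
    case False
    then have sl: "s' < 0" using s' hb by simp
    show ?thesis
    proof (rule that[of "- s'"])
      show "0 < - s'" using sl by simp
      fix N :: nat assume N: "1 \<le> N"
      have Np: "0 < real N" using N by simp
      have "1 \<le> D * (1 * real N powr s')" using key[OF order.refl N] by simp
      then have "real N powr (- s') * 1 \<le> real N powr (- s') * (D * real N powr s')"
        using Np by (intro mult_left_mono) auto
      also have "\<dots> = D" using Np by (simp add: powr_add[symmetric] mult.left_commute)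
      finally show "real N powr (- s') \<le> D" by simp
    qed
  qed
  obtain N :: nat where "1 \<le> N" "D < real N powr e" using unbounded_powr[OF e(1)] by blast
  then show False using e(2) by fastforce
qed


lemma exist_part:
  fixes r :: "nat \<Rightarrow> real"
  assumes H: "hyp_setting m p" and r: "\<forall>j<m. 0 < r j"
  shows "\<exists>D\<ge>1. HB_ineq TYPE('k::{real_normed_field,real_inner}) m p r D (hb_exp p r m)"
proof -
  interpret hyp_setting m p by (rule H)
  have "HB_ineq TYPE('k) m p r 1 (hb_exp p r m)"
    unfolding HB_ineq_def hb_exp_def
  proof (intro allI impI)
    fix n :: "nat \<Rightarrow> nat" and T :: "(nat \<Rightarrow> nat \<Rightarrow> 'k) \<Rightarrow> 'k"
    assume n: "\<forall>k<m. 1 \<le> n k" and B: "bounded_multilinear_form m p T"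
    show "mixed_norm r n (\<lambda>idx. norm (T (unit_args m idx))) m 0 (\<lambda>_. 0)
        \<le> 1 * form_norm m p T * (\<Prod>k<m. real (n k) powr max (1 / r k - 1 / hb_delta p k m) 0)"
      by (rule upper_bound[OF B pp pm(1) A1 A2 A3 A4 r n])
  qed
  then show ?thesis by blast
qed

lemma opt_part:
  fixes r :: "nat \<Rightarrow> real"
  assumes H: "hyp_setting m p" and r: "\<forall>j<m. 0 < r j"
  shows "\<forall>k<m. (\<forall>j. k < j \<and> j < m \<longrightarrow> hb_delta p j m \<le> r j) \<longrightarrow>
            (\<forall>s'. s' < hb_exp p r m k \<longrightarrow>
               \<not> (\<exists>D. HB_ineq TYPE('k::real_normed_field) m p r D ((hb_exp p r m)(k := s'))))"
proof -
  interpret hyp_setting m p by (rule H)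
  show ?thesis
  proof (intro allI impI)
    fix k s' assume k: "k < m" and c: "\<forall>j. k < j \<and> j < m \<longrightarrow> hb_delta p j m \<le> r j"
      and s': "s' < hb_exp p r m k"
    have c': "\<forall>j. k < j \<and> j < m \<longrightarrow> 0 < hb_delta p j m \<and> hb_delta p j m \<le> r j"
      using c A2 by force
    show "\<not> (\<exists>D. HB_ineq TYPE('k) m p r D ((hb_exp p r m)(k := s')))"
      by (rule optimal[OF pp ssum_lt1 r k c' s'])
  qed
qed

theorem mainTheorem6:
  fixes m :: nat and p r :: "nat \<Rightarrow> real"
  assumes "m \<ge> 2"
    and "\<forall>j<m. 0 < r j"
    and "1 < p (m - 1)" and "p (m - 1) \<le> 2"
    and "\<forall>j<m - 1. 2 < p j"
    and "(\<Sum>j<m. 1 / p j) < 1"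
  shows "(\<exists>D\<ge>1. HB_ineq TYPE(real) m p r D (hb_exp p r m))
       \<and> (\<forall>k<m. (\<forall>j. k < j \<and> j < m \<longrightarrow> hb_delta p j m \<le> r j) \<longrightarrow>
            (\<forall>s'. s' < hb_exp p r m k \<longrightarrow>
               \<not> (\<exists>D. HB_ineq TYPE(real) m p r D ((hb_exp p r m)(k := s')))))
       \<and> (\<exists>D\<ge>1. HB_ineq TYPE(complex) m p r D (hb_exp p r m))
       \<and> (\<forall>k<m. (\<forall>j. k < j \<and> j < m \<longrightarrow> hb_delta p j m \<le> r j) \<longrightarrow>
            (\<forall>s'. s' < hb_exp p r m k \<longrightarrow>
               \<not> (\<exists>D. HB_ineq TYPE(complex) m p r D ((hb_exp p r m)(k := s')))))"
proof -
  have H: "hyp_setting m p" by unfold_locales (use assms in auto)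
  show ?thesis
    using exist_part[OF H assms(2), where 'k = real] opt_part[OF H assms(2), where 'k = real]
      exist_part[OF H assms(2), where 'k = complex] opt_part[OF H assms(2), where 'k = complex]
    by blast
qed


end
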